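(* Let $j$ be a fixed positive integer and let $g:[0,\infty)^j\to[0,\infty)$ be a nonnegative function that is Riemann integrable on every bounded box. Suppose there are constants $C,d\ge 0$ such that $g(x_1,\dots,x_j)\le C(x_1+\cdots+x_j)^d$ for all $x_1,\dots,x_j\ge 0$. Then \[ \mathbf E\left[g\left(\frac{X_1}{\mu},\dots,\frac{X_j}{\mu}\right)\right]=\int_0^\infty\!\!\cdots\int_0^\infty g(x_1,\dots,x_j)e^{-x_1-\cdots-x_j}\,dx_1\cdots dx_j+o(1). \] Moreover, the same holds with $(X_1,\dots,X_j)$ replaced by $(X_{\sigma(1)},\dots,X_{\sigma(j)})$ for any distinct indices $\sigma(1),\dots,\sigma(j)\in\{1,\dots,m\}$, with the $o(1)$ term independent of $\sigma$.
   Context: Let $N$ be a positive integer and $\omega=\omega(N)$ a function with $\omega(N)\to\infty$. For integers $m$ with $\omega<m<N/\omega$, let $\Omega$ be the set of all sequences $(X_1,\dots,X_m)$ of positive integers with $X_1+\cdots+X_m=N$, equipped with the uniform distribution, and write $\mu=N/m$. All asymptotic notation ($o(1)$, $O(\cdot)$, a.a.s.) refers to $N\to\infty$, uniformly over all $m$ with $\omega<m<N/\omega$. *)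

theory Defs
  imports "HOL-Analysis.Analysis"
begin

text \<open>Riemann integrability on a compact box: the classical Riemann integral, i.e. the
  gauge integral restricted to constant gauges (tagged divisions of mesh < delta).\<close>
definition riemann_integrable_on :: "('a::euclidean_space \<Rightarrow> real) \<Rightarrow> 'a set \<Rightarrow> bool" where
  "riemann_integrable_on f S \<longleftrightarrow>
     (\<exists>I. \<forall>e>0. \<exists>\<delta>>0. \<forall>D. D tagged_division_of S \<and> (\<lambda>x. ball x \<delta>) fine D \<longrightarrow>
        \<bar>(\<Sum>(x,K)\<in>D. measure lborel K * f x) - I\<bar> < e)"

definition orthant :: "(real^'j) set" where
  "orthant = {x. \<forall>i. 0 \<le> x $ i}"

definition compositions :: "nat \<Rightarrow> nat \<Rightarrow> (nat \<Rightarrow> nat) set" where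
  "compositions N m = {X. (\<forall>i\<in>{1..m}. 0 < X i) \<and> (\<forall>i. i \<notin> {1..m} \<longrightarrow> X i = 0)
                          \<and> (\<Sum>i=1..m. X i) = N}"

definition comp_expect :: "nat \<Rightarrow> nat \<Rightarrow> ((nat \<Rightarrow> nat) \<Rightarrow> real) \<Rightarrow> real" where
  "comp_expect N m F = (\<Sum>X\<in>compositions N m. F X) / real (card (compositions N m))"

text \<open>Power with the convention s^0 = 1 (also for s = 0).\<close>
definition pow0 :: "real \<Rightarrow> real \<Rightarrow> real" where
  "pow0 s d = (if d = 0 then 1 else s powr d)"

end

theory Submission
  imports Defs
begin



definition comp_on :: "'a set \<Rightarrow> nat \<Rightarrow> ('a \<Rightarrow> nat) set" where
  "comp_on S n = {X. (\<forall>i\<in>S. 0 < X i) \<and> (\<forall>i. i \<notin> S \<longrightarrow> X i = 0) \<and> sum X S = n}"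

lemma finite_bounded_fun:
  assumes "finite S"
  shows "finite {X::'a\<Rightarrow>nat. (\<forall>i. i \<notin> S \<longrightarrow> X i = 0) \<and> (\<forall>i. X i \<le> n)}"
proof -
  let ?A = "{X::'a\<Rightarrow>nat. (\<forall>i. i \<notin> S \<longrightarrow> X i = 0) \<and> (\<forall>i. X i \<le> n)}"
  have "inj_on (\<lambda>X. restrict X S) ?A"
    by (auto simp: inj_on_def restrict_def fun_eq_iff) (metis)
  moreover have "(\<lambda>X. restrict X S) ` ?A \<subseteq> PiE S (\<lambda>_. {..n})" by auto
  hence "finite ((\<lambda>X. restrict X S) ` ?A)" using assms by (meson finite_PiE finite_atMost finite_subset)
  ultimately show ?thesis using finite_imageD by blast
qed

lemma finite_comp_on: assumes "finite S" shows "finite (comp_on S n)"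
proof -
  have "comp_on S n \<subseteq> {X::'a\<Rightarrow>nat. (\<forall>i. i \<notin> S \<longrightarrow> X i = 0) \<and> (\<forall>i. X i \<le> n)}"
  proof
    fix X assume X: "X \<in> comp_on S n"
    have "\<forall>i. X i \<le> n"
    proof
      fix i show "X i \<le> n"
      proof (cases "i \<in> S")
        case True thus ?thesis using X assms member_le_sum[of i S X] by (auto simp: comp_on_def)
      next
        case False thus ?thesis using X by (auto simp: comp_on_def)
      qed
    qed
    thus "X \<in> {X::'a\<Rightarrow>nat. (\<forall>i. i \<notin> S \<longrightarrow> X i = 0) \<and> (\<forall>i. X i \<le> n)}" using X by (auto simp: comp_on_def)
  qed
  thus ?thesis using finite_bounded_fun[OF assms] finite_subset by blast
qed

lemma sum_choose_shift: "(\<Sum>t\<in>{1..<n}. (n - t - 1) choose q) = (n - 1) choose Suc q"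
proof (cases "n")
  case 0 thus ?thesis by simp
next
  case (Suc n')
  have "(\<Sum>t\<in>{1..<n}. (n - t - 1) choose q) = (\<Sum>t\<in>{0..<n'}. (n' - t - 1) choose q)"
    unfolding Suc by (rule sum.reindex_bij_witness[where i="\<lambda>t. t+1" and j="\<lambda>t. t - 1"]) auto
  also have "\<dots> = (\<Sum>t\<in>{0..<n'}. t choose q)"
    by (subst sum.atLeastLessThan_rev) (auto intro!: sum.cong)
  also have "\<dots> = n' choose Suc q"
  proof (cases n')
    case 0 thus ?thesis by simp
  next
    case (Suc n'') 
    have "{0..<n'} = {..n''}" using Suc by auto
    hence "(\<Sum>t\<in>{0..<n'}. t choose q) = (\<Sum>t\<le>n''. t choose q)" by simp
    also have "\<dots> = Suc n'' choose Suc q" by (rule sum_choose_upper)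
    finally show ?thesis using Suc by simp
  qed
  finally show ?thesis using Suc by simp
qed

lemma sum_pos_nat: "finite F \<Longrightarrow> F \<noteq> {} \<Longrightarrow> \<forall>i\<in>F. 0 < (X i::nat) \<Longrightarrow> 0 < sum X F"
  by (metis sum_pos)

lemma card_comp_on:
  assumes "finite S" "S \<noteq> {}" "0 < n"
  shows "card (comp_on S n) = (n - 1) choose (card S - 1)"
  using assms(1,2,3)
proof (induction S arbitrary: n rule: finite_ne_induct)
  case (singleton x)
  have "comp_on {x} n = {(\<lambda>i. if i = x then n else 0)}"
    using singleton by (auto simp: comp_on_def fun_eq_iff)
  thus ?case by simp
next
  case (insert x F)
  have eq: "comp_on (insert x F) n = (\<Union>t\<in>{1..<n}. (\<lambda>Y. Y(x := t)) ` comp_on F (n - t))"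
  proof (rule set_eqI, rule iffI)
    fix X assume X: "X \<in> comp_on (insert x F) n"
    have pos: "0 < sum X F" using X insert by (intro sum_pos_nat) (auto simp: comp_on_def)
    have tot: "X x + sum X F = n" using X insert by (auto simp: comp_on_def)
    have s0: "sum (X(x:=0)) F = sum X F" using insert by (intro sum.cong) auto
    have "X(x := 0) \<in> comp_on F (n - X x)"
      using X insert tot s0 by (auto simp: comp_on_def)
    moreover have "X = (X(x:=0))(x := X x)" by simp
    moreover have "X x \<in> {1..<n}" using X pos tot by (auto simp: comp_on_def)
    ultimately show "X \<in> (\<Union>t\<in>{1..<n}. (\<lambda>Y. Y(x := t)) ` comp_on F (n - t))" by blast
  next
    fix X assume "X \<in> (\<Union>t\<in>{1..<n}. (\<lambda>Y. Y(x := t)) ` comp_on F (n - t))"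
    then obtain t Y where t: "t \<in> {1..<n}" and Y: "Y \<in> comp_on F (n - t)" and XY: "X = Y(x:=t)" by blast
    have "sum X F = sum Y F" unfolding XY using insert by (intro sum.cong) auto
    thus "X \<in> comp_on (insert x F) n" using t Y XY insert by (auto simp: comp_on_def)
  qed
  have "card (comp_on (insert x F) n) = (\<Sum>t\<in>{1..<n}. card ((\<lambda>Y. Y(x := t)) ` comp_on F (n - t)))"
    unfolding eq
  proof (rule card_UN_disjoint)
    show "\<forall>i\<in>{1..<n}. finite ((\<lambda>Y. Y(x := i)) ` comp_on F (n - i))" using finite_comp_on insert by auto
    show "\<forall>i\<in>{1..<n}. \<forall>j\<in>{1..<n}. i \<noteq> j \<longrightarrow> (\<lambda>Y. Y(x := i)) ` comp_on F (n - i) \<inter> (\<lambda>Y. Y(x := j)) ` comp_on F (n - j) = {}"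
      by (auto dest: fun_cong[where x=x])
  qed simp
  also have "\<dots> = (\<Sum>t\<in>{1..<n}. card (comp_on F (n - t)))"
  proof (intro sum.cong refl card_image)
    fix t show "inj_on (\<lambda>Y. Y(x := t)) (comp_on F (n - t))"
      using insert by (auto simp: inj_on_def comp_on_def fun_eq_iff) (metis)
  qed
  also have "\<dots> = (\<Sum>t\<in>{1..<n}. (n - t - 1) choose (card F - 1))"
    using insert by (intro sum.cong refl insert.IH) auto
  also have "\<dots> = (n - 1) choose Suc (card F - 1)" by (rule sum_choose_shift)
  finally show ?case using insert by (simp add: Suc_diff_1 card_gt_0_iff)
qed



lemma compositions_eq: "compositions N m = comp_on {1..m} N"
  by (simp add: compositions_def comp_on_def)

lemma card_compositions: "0 < N \<Longrightarrow> 0 < m \<Longrightarrow> card (compositions N m) = (N - 1) choose (m - 1)"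
  unfolding compositions_eq by (subst card_comp_on) auto

lemma split_sum_sigma:
  fixes \<sigma> :: "'j::finite \<Rightarrow> nat"
  assumes "inj \<sigma>" "range \<sigma> \<subseteq> {1..m}"
  shows "sum X {1..m} = (\<Sum>j\<in>UNIV. X (\<sigma> j)) + sum X ({1..m} - range \<sigma>)"
proof -
  have "sum X {1..m} = sum X ({1..m} - range \<sigma>) + sum X (range \<sigma>)"
    using assms by (intro sum.subset_diff) auto
  moreover have "sum X (range \<sigma>) = (\<Sum>j\<in>UNIV. X (\<sigma> j))"
    using assms by (simp add: sum.reindex)
  ultimately show ?thesis by (simp add: add.commute)
qed

lemma fiber_card:
  fixes \<sigma> :: "'j::finite \<Rightarrow> nat" and a :: "'j \<Rightarrow> nat"
  assumes inj: "inj \<sigma>" and rng: "range \<sigma> \<subseteq> {1..m}" and apos: "\<forall>i. 0 < a i"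
    and mk: "CARD('j) + 2 \<le> m"
  shows "card {X. X \<in> compositions N m \<and> (\<lambda>i. X (\<sigma> i)) = a}
           = (N - sum a UNIV - 1) choose (m - CARD('j) - 1)"
proof -
  define S' where "S' = {1..m} - range \<sigma>"
  have cS': "card S' = m - CARD('j)"
    unfolding S'_def using inj rng by (simp add: card_Diff_subset card_image)
  have fS': "finite S'" unfolding S'_def by simp
  have neS': "S' \<noteq> {}" using cS' mk by auto
  let ?sa = "sum a UNIV"
  let ?fib = "{X. X \<in> compositions N m \<and> (\<lambda>i. X (\<sigma> i)) = a}"
  have sumX: "sum X {1..m} = ?sa + sum X S'" if "(\<lambda>i. X (\<sigma> i)) = a" for X
  proof -
    have "(\<Sum>j\<in>UNIV. X (\<sigma> j)) = ?sa" using that by (metis (no_types))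
    thus ?thesis using split_sum_sigma[OF inj rng, of X] unfolding S'_def by simp
  qed
  show ?thesis
  proof (cases "?sa < N")
    case False
    have "?fib = {}"
    proof (rule ccontr)
      assume "?fib \<noteq> {}"
      then obtain X where X: "X \<in> compositions N m" "(\<lambda>i. X (\<sigma> i)) = a" by blast
      have "0 < sum X S'" using X fS' neS' unfolding S'_def compositions_def
        by (intro sum_pos_nat) (auto simp: S'_def)
      moreover have "sum X {1..m} = N" using X by (simp add: compositions_def)
      ultimately show False using sumX[OF X(2)] False by simp
    qed
    hence c0: "card ?fib = 0" by (metis card.empty)
    have "N - ?sa - 1 = 0" using False by simp
    thus ?thesis using mk c0 by simp
  next
    case True
    define merge where "merge Y = (\<lambda>i. if i \<in> range \<sigma> then a (inv \<sigma> i) else Y i)" for Y :: "nat \<Rightarrow> nat"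
    have inj_m: "inj_on merge (comp_on S' (N - ?sa))"
    proof (rule inj_onI)
      fix Y1 Y2 assume Y: "Y1 \<in> comp_on S' (N - ?sa)" "Y2 \<in> comp_on S' (N - ?sa)" "merge Y1 = merge Y2"
      show "Y1 = Y2"
      proof
        fix i show "Y1 i = Y2 i"
        proof (cases "i \<in> range \<sigma>")
          case True
          hence "i \<notin> S'" by (simp add: S'_def)
          thus ?thesis using Y by (simp add: comp_on_def)
        next
          case False thus ?thesis using fun_cong[OF Y(3), of i] by (simp add: merge_def)
        qed
      qed
    qed
    have img: "?fib = merge ` comp_on S' (N - ?sa)"
    proof (rule set_eqI, rule iffI)
      fix X assume X: "X \<in> ?fib"
      define Y where "Y = (\<lambda>i. if i \<in> range \<sigma> then 0 else X i)"
      have XN: "sum X {1..m} = N" "\<forall>i\<in>{1..m}. 0 < X i" "\<forall>i. i \<notin> {1..m} \<longrightarrow> X i = 0"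
        using X by (auto simp: compositions_def)
      have "sum Y S' = sum X S'" unfolding Y_def S'_def by (intro sum.cong) auto
      hence "sum Y S' = N - ?sa" using sumX[of X] X XN by simp
      hence "Y \<in> comp_on S' (N - ?sa)" using XN unfolding comp_on_def Y_def S'_def by auto
      moreover have "merge Y = X"
      proof
        fix i show "merge Y i = X i"
        proof (cases "i \<in> range \<sigma>")
          case True then obtain j where "i = \<sigma> j" by blast
          thus ?thesis using X inj by (auto simp: merge_def)
        qed (simp add: merge_def Y_def)
      qed
      ultimately show "X \<in> merge ` comp_on S' (N - ?sa)" by blast
    next
      fix X assume "X \<in> merge ` comp_on S' (N - ?sa)"
      then obtain Y where Y: "Y \<in> comp_on S' (N - ?sa)" and XY: "X = merge Y" by blast
      have Xs: "(\<lambda>i. X (\<sigma> i)) = a" using inj by (auto simp: XY merge_def)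
      have "sum X S' = sum Y S'" unfolding XY merge_def S'_def by (intro sum.cong) auto
      hence "sum X {1..m} = N" using sumX[OF Xs] Y True by (simp add: comp_on_def)
      moreover have "\<forall>i\<in>{1..m}. 0 < X i"
      proof
        fix i assume i: "i \<in> {1..m}"
        show "0 < X i"
        proof (cases "i \<in> range \<sigma>")
          case True thus ?thesis using apos by (simp add: XY merge_def)
        next
          case False hence "i \<in> S'" using i by (simp add: S'_def)
          thus ?thesis using Y False by (simp add: XY merge_def comp_on_def)
        qed
      qed
      moreover have "\<forall>i. i \<notin> {1..m} \<longrightarrow> X i = 0"
        using Y rng by (auto simp: XY merge_def comp_on_def S'_def)
      ultimately show "X \<in> ?fib" using Xs by (simp add: compositions_def)
    qed
    have "card ?fib = card (comp_on S' (N - ?sa))" unfolding img by (rule card_image[OF inj_m])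
    also have "\<dots> = (N - ?sa - 1) choose (card S' - 1)"
      using True by (intro card_comp_on fS' neS') simp
    finally show ?thesis using cS' by simp
  qed
qed

lemma comp_expect_sum:
  fixes \<sigma> :: "'j::finite \<Rightarrow> nat" and F :: "('j \<Rightarrow> nat) \<Rightarrow> real"
  assumes inj: "inj \<sigma>" and rng: "range \<sigma> \<subseteq> {1..m}" and mk: "CARD('j) + 2 \<le> m" and N: "0 < N"
  shows "comp_expect N m (\<lambda>X. F (\<lambda>i. X (\<sigma> i))) =
     (\<Sum>a\<in>PiE UNIV (\<lambda>_. {1..N}). F a * real ((N - sum a UNIV - 1) choose (m - CARD('j) - 1)))
        / real ((N - 1) choose (m - 1))"
proof -
  let ?T = "PiE UNIV (\<lambda>_::'j. {1..N})"
  have fin: "finite (compositions N m)" unfolding compositions_eq by (rule finite_comp_on) simp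
  have maps: "(\<lambda>X i. X (\<sigma> i)) ` compositions N m \<subseteq> ?T"
  proof
    fix b assume "b \<in> (\<lambda>X i. X (\<sigma> i)) ` compositions N m"
    then obtain X where X: "X \<in> compositions N m" and b: "b = (\<lambda>i. X (\<sigma> i))" by blast
    have "\<forall>i. b i \<in> {1..N}"
    proof
      fix i
      have si: "\<sigma> i \<in> {1..m}" using rng by blast
      have "X (\<sigma> i) \<le> sum X {1..m}" by (rule member_le_sum) (use si in auto)
      thus "b i \<in> {1..N}" using X si by (auto simp: b compositions_def Suc_le_eq)
    qed
    thus "b \<in> ?T" by auto
  qed
  have "(\<Sum>X\<in>compositions N m. F (\<lambda>i. X (\<sigma> i))) =
        (\<Sum>a\<in>?T. \<Sum>X\<in>{X. X \<in> compositions N m \<and> (\<lambda>i. X (\<sigma> i)) = a}. F (\<lambda>i. X (\<sigma> i)))"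
    by (rule sum.group[symmetric, OF fin _ maps]) (simp add: finite_PiE)
  also have "\<dots> = (\<Sum>a\<in>?T. F a * real ((N - sum a UNIV - 1) choose (m - CARD('j) - 1)))"
  proof (rule sum.cong[OF refl])
    fix a assume a: "a \<in> ?T"
    have "(\<Sum>X\<in>{X. X \<in> compositions N m \<and> (\<lambda>i. X (\<sigma> i)) = a}. F (\<lambda>i. X (\<sigma> i)))
        = (\<Sum>X\<in>{X. X \<in> compositions N m \<and> (\<lambda>i. X (\<sigma> i)) = a}. F a)" by (rule sum.cong) auto
    also have "\<dots> = F a * real (card {X. X \<in> compositions N m \<and> (\<lambda>i. X (\<sigma> i)) = a})" by simp
    also have "card {X. X \<in> compositions N m \<and> (\<lambda>i. X (\<sigma> i)) = a} = (N - sum a UNIV - 1) choose (m - CARD('j) - 1)"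
      using a by (intro fiber_card inj rng mk) (auto simp: PiE_iff Suc_le_eq)
    finally show "(\<Sum>X\<in>{X. X \<in> compositions N m \<and> (\<lambda>i. X (\<sigma> i)) = a}. F (\<lambda>i. X (\<sigma> i))) =
        F a * real ((N - sum a UNIV - 1) choose (m - CARD('j) - 1))" .
  qed
  finally show ?thesis unfolding comp_expect_def using card_compositions[OF N] mk by simp
qed



lemma binom_step1:
  assumes "Suc j < m" "m \<le> N"
  shows "real ((N - 1 - Suc j) choose (m - 1 - Suc j)) * real (N - 1 - j) =
         real ((N - 1 - j) choose (m - 1 - j)) * real (m - 1 - j)"
proof -
  obtain n' where n': "N - 1 - j = Suc n'" using assms by (metis Suc_diff_Suc diff_diff_left less_le_trans Suc_lessD plus_1_eq_Suc)
  obtain k' where k': "m - 1 - j = Suc k'" using assms by (metis Suc_diff_Suc diff_diff_left plus_1_eq_Suc)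
  have a: "N - 1 - Suc j = n'" using n' by simp
  have b: "m - 1 - Suc j = k'" using k' by simp
  have "Suc k' * (Suc n' choose Suc k') = Suc n' * (n' choose k')" by (rule Suc_times_binomial)
  hence "real (Suc k') * real (Suc n' choose Suc k') = real (Suc n') * real (n' choose k')"
    by (metis of_nat_mult)
  thus ?thesis unfolding a b n' k' by (simp add: algebra_simps)
qed

lemma R1_bounds:
  assumes "1 \<le> m" "m \<le> N" "j < m"
  shows "((real m - j) / N) ^ j * real ((N-1) choose (m-1)) \<le> real ((N-1-j) choose (m-1-j))
       \<and> real ((N-1-j) choose (m-1-j)) \<le> (real m / N) ^ j * real ((N-1) choose (m-1))"
  using assms(3)
proof (induction j)
  case 0 thus ?case by simp
next
  case (Suc j)
  have IH: "((real m - j) / N) ^ j * real ((N-1) choose (m-1)) \<le> real ((N-1-j) choose (m-1-j))"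
       "real ((N-1-j) choose (m-1-j)) \<le> (real m / N) ^ j * real ((N-1) choose (m-1))"
    using Suc by auto
  have st: "real ((N - 1 - Suc j) choose (m - 1 - Suc j)) =
         real ((N - 1 - j) choose (m - 1 - j)) * (real (m - 1 - j) / real (N - 1 - j))"
    using binom_step1[OF Suc.prems assms(2)] Suc.prems assms by (simp add: field_simps)
  have Npos: "real (N - 1 - j) > 0" using Suc.prems assms by simp
  have r_up: "real (m - 1 - j) / real (N - 1 - j) \<le> real m / N"
  proof -
    have h: "real m * (1+real j) \<le> real N * (1 + real j)" by (intro mult_right_mono) (use assms in auto)
    have "real (m - 1 - j) * N \<le> real m * real (N - 1 - j)"
      using h Suc.prems assms by (simp add: of_nat_diff algebra_simps)
    thus ?thesis using Npos assms Suc.prems by (simp add: divide_simps)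
  qed
  have r_lo: "(real m - Suc j) / N \<le> real (m - 1 - j) / real (N - 1 - j)"
  proof -
    have e: "(real m - Suc j) = real (m - 1 - j)" using Suc.prems by (simp add: of_nat_diff)
    have i: "real (m - 1 - j) / N \<le> real (m - 1 - j) / real (N - 1 - j)"
      using Npos by (intro frac_le) auto
    show ?thesis by (subst e) (rule i)
  qed
  have r_nn: "0 \<le> (real m - Suc j) / N" by (intro divide_nonneg_nonneg) (use Suc.prems in auto)
  have c0: "0 \<le> real ((N-1) choose (m-1))" by simp
  show ?case
  proof
    have "((real m - Suc j) / N) ^ Suc j * real ((N-1) choose (m-1))
        = ((real m - Suc j) / N) * (((real m - Suc j) / N) ^ j * real ((N-1) choose (m-1)))" by simp
    also have "\<dots> \<le> ((real m - Suc j) / N) * (((real m - j) / N) ^ j * real ((N-1) choose (m-1)))"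
      using r_nn c0 by (intro mult_left_mono mult_right_mono power_mono) (auto simp: divide_right_mono)
    also have "\<dots> \<le> ((real m - Suc j) / N) * real ((N-1-j) choose (m-1-j))"
      using r_nn IH(1) by (intro mult_left_mono) auto
    also have "\<dots> \<le> (real (m - 1 - j) / real (N - 1 - j)) * real ((N-1-j) choose (m-1-j))"
      using r_lo by (intro mult_right_mono) auto
    finally show "((real m - Suc j) / N) ^ Suc j * real ((N-1) choose (m-1)) \<le> real ((N-1-Suc j) choose (m-1-Suc j))"
      using st by (simp add: mult.commute)
  next
    have "real ((N-1-Suc j) choose (m-1-Suc j)) = (real (m - 1 - j) / real (N - 1 - j)) * real ((N-1-j) choose (m-1-j))"
      using st by simp
    also have "\<dots> \<le> (real m / N) * real ((N-1-j) choose (m-1-j))"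
      using r_up by (intro mult_right_mono) auto
    also have "\<dots> \<le> (real m / N) * ((real m / N) ^ j * real ((N-1) choose (m-1)))"
      using IH(2) by (intro mult_left_mono) auto
    finally show "real ((N-1-Suc j) choose (m-1-Suc j)) \<le> (real m / N) ^ Suc j * real ((N-1) choose (m-1))"
      by simp
  qed
qed

lemma q_bounds:
  assumes "t + r \<le> n" "1 \<le> r"
  shows "(1 - real r / (n - t)) ^ t * real (n choose r) \<le> real ((n - t) choose r)
       \<and> real ((n - t) choose r) \<le> (1 - real r / n) ^ t * real (n choose r)"
  using assms(1)
proof (induction t)
  case 0 thus ?case by simp
next
  case (Suc t)
  have IH: "(1 - real r / (n - t)) ^ t * real (n choose r) \<le> real ((n - t) choose r)"
           "real ((n - t) choose r) \<le> (1 - real r / n) ^ t * real (n choose r)"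
    using Suc by auto
  have pos: "real (n - t) > 0" "real (n - Suc t) > 0" using Suc.prems assms by auto
  have ab: "(n - t - r) * ((n - t) choose r) = (n - t) * ((n - t - 1) choose r)"
    by (rule binomial_absorb_comp)
  hence "real (n - t - r) * real ((n - t) choose r) = real (n - t) * real ((n - Suc t) choose r)"
    by (metis diff_Suc_eq_diff_pred diff_commute of_nat_mult)
  hence st: "real ((n - Suc t) choose r) = (1 - real r / real (n - t)) * real ((n - t) choose r)"
    using pos Suc.prems by (simp add: of_nat_diff field_simps)
  have f_nn: "0 \<le> 1 - real r / real (n - t)" using pos Suc.prems by (simp add: of_nat_diff field_simps)
  have f_up: "1 - real r / real (n - t) \<le> 1 - real r / n"
    using pos by (simp add: frac_le)
  have g_nn: "0 \<le> 1 - real r / real (n - Suc t)" using pos Suc.prems by (simp add: of_nat_diff field_simps)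
  have g_up: "1 - real r / real (n - Suc t) \<le> 1 - real r / real (n - t)"
    using pos by (simp add: frac_le)
  have eq1: "real (n - t) = real n - t" "real (n - Suc t) = real n - Suc t" using Suc.prems by (auto simp: of_nat_diff)
  have c0: "0 \<le> real (n choose r)" by simp
  have h_nn: "0 \<le> 1 - real r / n" using assms Suc.prems by (simp add: field_simps)
  show ?case
  proof
    have "(1 - real r / real (n - Suc t)) ^ Suc t * real (n choose r)
       = (1 - real r / real (n - Suc t)) * ((1 - real r / real (n - Suc t)) ^ t * real (n choose r))" by simp
    also have "\<dots> \<le> (1 - real r / real (n - t)) * ((1 - real r / real (n - t)) ^ t * real (n choose r))"
      using g_nn g_up f_nn c0 by (intro mult_mono mult_right_mono power_mono) auto
    also have "\<dots> \<le> (1 - real r / real (n - t)) * real ((n - t) choose r)"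
      using IH(1) f_nn eq1 by (intro mult_left_mono) auto
    finally show "(1 - real r / real (n - Suc t)) ^ Suc t * real (n choose r) \<le> real ((n - Suc t) choose r)"
      using st by simp
  next
    have "real ((n - Suc t) choose r) \<le> (1 - real r / real (n - t)) * ((1 - real r / n) ^ t * real (n choose r))"
      using st IH(2) f_nn eq1 by (simp add: mult_left_mono)
    also have "\<dots> \<le> (1 - real r / n) * ((1 - real r / n) ^ t * real (n choose r))"
      using f_up h_nn by (intro mult_right_mono) (auto intro!: mult_nonneg_nonneg zero_le_power)
    finally show "real ((n - Suc t) choose r) \<le> (1 - real r / real n) ^ Suc t * real (n choose r)" by simp
  qed
qed



definition Pm :: "nat \<Rightarrow> nat \<Rightarrow> nat \<Rightarrow> nat \<Rightarrow> real" where
  "Pm k N m s = real ((N - s - 1) choose (m - k - 1)) / real ((N - 1) choose (m - 1))"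

lemma one_minus_le_exp_pow:
  assumes "0 \<le> (y::real)" "y \<le> 1" shows "(1 - y) ^ t \<le> exp (- (y * t))"
proof -
  have "(1 - y) ^ t \<le> exp (-y) ^ t"
    using assms by (intro power_mono) (auto simp: exp_ge_add_one_self[of "-y", simplified])
  also have "\<dots> = exp (- (y * t))" by (simp add: exp_of_nat_mult[symmetric] mult.commute)
  finally show ?thesis .
qed

lemma one_minus_ge_exp_pow:
  assumes "0 \<le> (y::real)" "y \<le> 1/2" shows "exp (- ((y + 2*y^2) * t)) \<le> (1 - y) ^ t"
proof -
  have l: "- y - 2 * y^2 \<le> ln (1 - y)" using ln_one_minus_pos_lower_bound[of y] assms by (simp add: power2_eq_square)
  have "exp (- y - 2*y^2) \<le> 1 - y"
    using l assms by (metis diff_gt_0_iff_gt exp_le_cancel_iff exp_ln le_less_trans less_numeral_extra(1) one_less_numeral_iff order_le_less_trans semiring_norm(76) divide_less_eq_1_pos zero_less_numeral)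
  hence "exp (- y - 2*y^2) ^ t \<le> (1 - y) ^ t" by (intro power_mono) auto
  moreover have "exp (- y - 2*y^2) ^ t = exp (- ((y + 2*y^2) * t))"
    by (simp add: exp_of_nat_mult[symmetric] algebra_simps)
  ultimately show ?thesis by simp
qed



lemma P_upper:
  assumes mk: "2*k+2 \<le> m" and mN: "m \<le> N" and ks: "k \<le> s"
  shows "Pm k N m s \<le> (real m / N)^k * exp (- ((real s - k) * (real m / N) / 2))"
proof -
  define n where "n = N - 1 - k"
  define r where "r = m - 1 - k"
  define t where "t = s - k"
  have c_pos: "0 < real ((N-1) choose (m-1))" using mk mN by simp
  have eqN: "N - s - 1 = n - t" unfolding n_def t_def using ks by simp
  have eqr: "m - k - 1 = r" unfolding r_def by simp
  have R1: "real (n choose r) \<le> (real m / N)^k * real ((N-1) choose (m-1))"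
    using R1_bounds[of m N k] mk mN unfolding n_def r_def by simp
  have r1: "1 \<le> r" using mk unfolding r_def by simp
  have tr: "real t = real s - k" using ks unfolding t_def by (simp add: of_nat_diff)
  have main: "real ((n - t) choose r) \<le> exp (- ((real s - k) * (real m / N) / 2)) * real (n choose r)"
  proof (cases "t + r \<le> n")
    case True
    have rn: "r \<le> n" using True by simp
    have npos: "0 < real n" using rn r1 by simp
    have y01: "0 \<le> real r / n" "real r / n \<le> 1" using rn npos by auto
    have q: "real ((n - t) choose r) \<le> (1 - real r / n) ^ t * real (n choose r)"
      using q_bounds[OF True r1] by simp
    also have "\<dots> \<le> exp (- (real r / n * t)) * real (n choose r)"
      by (intro mult_right_mono one_minus_le_exp_pow y01) simp
    also have "\<dots> \<le> exp (- ((real s - k) * (real m / N) / 2)) * real (n choose r)"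
    proof (intro mult_right_mono)
      have "real m / 2 \<le> real r" using mk unfolding r_def by (simp add: of_nat_diff)
      moreover have "real n \<le> N" unfolding n_def by simp
      ultimately have "(real m / 2) / N \<le> real r / n" using npos by (intro frac_le) auto
      hence "(real m / 2) / N * t \<le> real r / n * t" by (intro mult_right_mono) auto
      hence "(real m / N) / 2 * t \<le> real r / n * t" by simp
      thus "exp (- (real r / n * t)) \<le> exp (- ((real s - k) * (real m / N) / 2))"
        using tr by (simp add: mult.commute)
    qed simp
    finally show ?thesis .
  next
    case False
    hence "n - t < r" using r1 by arith
    hence z: "(n - t) choose r = 0" by (simp add: binomial_eq_0)
    have "0 \<le> exp (- ((real s - k) * (real m / N) / 2)) * real (n choose r)" by simp
    thus ?thesis unfolding z by simp
  qed
  have "Pm k N m s = real ((n - t) choose r) / real ((N-1) choose (m-1))"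
    unfolding Pm_def eqN eqr ..
  also have "\<dots> \<le> exp (- ((real s - k) * (real m / N) / 2)) * ((real m / N)^k * real ((N-1) choose (m-1))) / real ((N-1) choose (m-1))"
    using main R1 c_pos by (intro divide_right_mono order_trans[OF main] mult_left_mono) auto
  also have "\<dots> = (real m / N)^k * exp (- ((real s - k) * (real m / N) / 2))" using c_pos by simp
  finally show ?thesis .
qed



lemma P_local:
  fixes k N m s :: nat and T \<delta> :: real
  assumes T0: "0 \<le> T" and d0: "0 < \<delta>" and dsmall: "(k + 1 + T) * \<delta> \<le> 1/4"
    and m1: "1 \<le> m * \<delta>" and mN: "m \<le> \<delta> * N" and ks: "k \<le> s" and sT: "s * m \<le> T * N"
  shows "(1 - k*\<delta>)^k * exp (- ((2*T*(T+1) + 8*T) * \<delta>)) \<le> Pm k N m s * (real N / m)^k * exp (s * m / N)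
       \<and> Pm k N m s * (real N / m)^k * exp (s * m / N) \<le> exp ((k + (k+1)*T) * \<delta>)"
proof -
  define n where "n = N - 1 - k"
  define r where "r = m - 1 - k"
  define t where "t = s - k"
  define v where "v = real m / N"
  define C where "C = real ((N-1) choose (m-1))"
  have dA: "(real (k+1) + T) * \<delta> = real k * \<delta> + T * \<delta> + \<delta>" by (simp add: algebra_simps)
  have dB: "0 \<le> real k * \<delta>" "0 \<le> T * \<delta>" using d0 T0 by auto
  have dC: "(T + 1) * \<delta> = T * \<delta> + \<delta>" by (simp add: algebra_simps)
  have d4: "\<delta> \<le> 1/4" using dsmall dA dB by linarith
  have kd: "k * \<delta> \<le> 1/4" using dsmall dA dB d0 by linarith
  have Td: "(T + 1) * \<delta> \<le> 1/4" using dsmall dA dB dC by linarith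
  have mpos: "0 < real m" using m1 by (cases "m = 0") auto
  have m_big: "4 * (k + 1 + T) \<le> m"
  proof -
    have "4 * (k+1+T) * \<delta> = 4 * ((k+1+T) * \<delta>)" by simp
    hence "4 * (k+1+T) * \<delta> \<le> 1" using dsmall by linarith
    also have "\<dots> \<le> m * \<delta>" by (rule m1)
    finally show ?thesis using d0 by simp
  qed
  have mkA: "real(2*k+2) = 2*real k + 2" "4*(real(k+1)+T) = 4*real k + 4 + 4*T" by simp_all
  have "real(2*k+2) \<le> real m" using mkA m_big T0 by linarith
  hence mk: "2*k+2 \<le> m" by (simp only: of_nat_le_iff)
  have "\<delta> * real N \<le> 1 * real N" by (intro mult_right_mono) (use d4 in auto)
  hence mN': "real m \<le> N" using mN by linarith
  hence mNn: "m \<le> N" by simp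
  have Npos: "0 < real N" using mpos mN' by simp
  have v0: "0 \<le> v" "v \<le> \<delta>" using mN Npos unfolding v_def by (auto simp: divide_simps mult.commute)
  have invm: "1 / real m \<le> \<delta>" using m1 mpos by (simp add: divide_simps mult.commute)
  have sN: "real s \<le> T * \<delta> * N"
  proof -
    have "real s * m \<le> T * N" using sT by simp
    hence "real s \<le> T * N / m" using mpos by (simp add: divide_simps)
    also have "\<dots> = T * N * (1/m)" by simp
    also have "\<dots> \<le> T * N * \<delta>" using invm T0 Npos by (intro mult_left_mono) auto
    finally show ?thesis by (simp add: algebra_simps)
  qed
  have oneN: "1 \<le> \<delta> * N"
  proof -
    have "1 \<le> m * \<delta>" by (rule m1)
    also have "\<dots> \<le> (\<delta> * N) * \<delta>" using mN d0 by (intro mult_right_mono) auto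
    also have "\<dots> \<le> \<delta> * N" using d4 d0 Npos by (simp add: mult_left_le)
    finally show ?thesis .
  qed
  have sm_le: "real s + real m + 1 \<le> N"
  proof -
    have "real s + real m + 1 \<le> T * \<delta> * N + \<delta> * N + \<delta> * N" using sN mN oneN by linarith
    also have "\<dots> = ((T + 1) * \<delta> + \<delta>) * N" by (simp add: algebra_simps)
    also have "\<dots> \<le> N" by (rule mult_left_le_one_le) (use Td d4 Npos d0 T0 in auto)
    finally show ?thesis .
  qed
  have tr_le: "t + r \<le> n" using sm_le ks unfolding t_def r_def n_def by linarith
  have r1: "1 \<le> r" using mk unfolding r_def by simp
  have eqN: "N - s - 1 = n - t" unfolding n_def t_def using ks by simp
  have eqr: "m - k - 1 = r" unfolding r_def by simp
  have Cpos: "0 < C" unfolding C_def using mk mNn by simp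
  have Pm_eq: "Pm k N m s = real ((n - t) choose r) / C"
    unfolding Pm_def eqN eqr C_def ..
  have R1: "((real m - k) / N) ^ k * C \<le> real (n choose r)" "real (n choose r) \<le> (real m / N)^k * C"
    using R1_bounds[of m N k] mk mNn unfolding n_def r_def C_def by auto
  have q: "(1 - real r / real (n - t)) ^ t * real (n choose r) \<le> real ((n - t) choose r)"
          "real ((n - t) choose r) \<le> (1 - real r / n) ^ t * real (n choose r)"
    using q_bounds[OF tr_le r1] by auto
  have tr: "real t = real s - k" using ks unfolding t_def by (simp add: of_nat_diff)
  have nt: "real (n - t) = real N - 1 - s" using tr_le ks sm_le unfolding n_def t_def by (simp add: of_nat_diff)
  have nr: "real n = real N - 1 - k" "real r = real m - 1 - k" using mk mNn unfolding n_def r_def by (auto simp: of_nat_diff)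
  have tv: "t * v \<le> T"
  proof -
    have "t * v \<le> s * v" using tr v0 by (intro mult_right_mono) auto
    also have "\<dots> = s * m / N" unfolding v_def by simp
    also have "\<dots> \<le> T" using sT Npos by (simp add: divide_simps)
    finally show ?thesis .
  qed
  have expE: "exp (s * m / N) = exp (s * v)" unfolding v_def by simp
  have Nm: "(real N / m)^k * (real m / N)^k = 1" using mpos Npos by (simp add: power_mult_distrib[symmetric])
  have up: "Pm k N m s * (real N / m)^k * exp (s * m / N) \<le> exp ((k + (k+1)*T) * \<delta>)"
  proof -
    define y1 where "y1 = real r / n"
    have npos: "0 < real n" using nr mk mN sm_le ks by simp
    have y1_01: "0 \<le> y1" "y1 \<le> 1" using npos tr_le unfolding y1_def by (auto simp: divide_simps)
    have "Pm k N m s \<le> (1 - y1) ^ t * real (n choose r) / C"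
      unfolding Pm_eq y1_def using q(2) Cpos by (simp add: divide_right_mono)
    also have "\<dots> \<le> exp (- (y1 * t)) * ((real m / N)^k * C) / C"
      using R1(2) Cpos y1_01 by (intro divide_right_mono mult_mono one_minus_le_exp_pow) auto
    also have "\<dots> = exp (- (y1 * t)) * (real m / N)^k" using Cpos by simp
    finally have P1: "Pm k N m s \<le> exp (- (y1 * t)) * (real m / N)^k" .
    have "Pm k N m s * (real N / m)^k * exp (s * m / N) \<le> exp (- (y1 * t)) * (real m / N)^k * (real N / m)^k * exp (s * v)"
      unfolding expE by (intro mult_right_mono P1) auto
    also have "\<dots> = exp (s * v - y1 * t)" using Nm by (simp add: exp_diff exp_minus field_simps)
    also have "\<dots> \<le> exp ((k + (k+1)*T) * \<delta>)"
    proof -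
      have y1_lo: "v - (k+1) / N \<le> y1"
      proof -
        have "v - (k+1)/N = real r / N" unfolding v_def using nr Npos by (simp add: field_simps)
        also have "\<dots> \<le> real r / n" using npos nr by (intro divide_left_mono) auto
        finally show ?thesis unfolding y1_def .
      qed
      have "s * v - y1 * t \<le> s * v - (v - (k+1)/N) * t" using y1_lo tr by (intro diff_left_mono mult_right_mono) auto
      also have "\<dots> = k * v + (k+1) * (t / N)"
      proof -
        have sv: "real s = real k + real t" using tr by simp
        show ?thesis unfolding sv by (simp add: algebra_simps)
      qed
      also have "\<dots> \<le> k * \<delta> + (k+1) * (T * \<delta>)"
      proof (rule add_mono)
        show "k * v \<le> k * \<delta>" using v0 by (intro mult_left_mono) auto
        have "t / N \<le> s / N" using tr Npos by (simp add: divide_right_mono)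
        also have "\<dots> \<le> T * \<delta>" using sN Npos by (simp add: divide_simps mult.commute mult.left_commute)
        finally show "(k+1) * (t / N) \<le> (k+1) * (T * \<delta>)" by (intro mult_left_mono) auto
      qed
      finally show ?thesis by (simp add: algebra_simps)
    qed
    finally show ?thesis .
  qed
  have lo: "(1 - k*\<delta>)^k * exp (- ((2*T*(T+1) + 8*T) * \<delta>)) \<le> Pm k N m s * (real N / m)^k * exp (s * m / N)"
  proof -
    define y2 where "y2 = real r / real (n - t)"
    define z where "z = (T + 1) * \<delta>"
    have z0: "0 \<le> z" "z \<le> 1/4" using Td T0 d0 unfolding z_def by auto
    have ntpos: "(1 - z) * N \<le> real (n - t)"
    proof -
      have "(1 - z) * N = N - T * \<delta> * N - \<delta> * N" unfolding z_def by (simp add: algebra_simps)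
      also have "\<dots> \<le> N - s - 1" using sN oneN by linarith
      finally show ?thesis using nt by simp
    qed
    have "0 < (1 - z) * N" using z0 Npos by (intro mult_pos_pos) auto
    hence nt0: "0 < real (n - t)" using ntpos by linarith
    have y2_0: "0 \<le> y2" unfolding y2_def by simp
    have y2_up: "y2 \<le> v * (1 + 2*z)"
    proof -
      have "y2 \<le> real m / ((1 - z) * N)" unfolding y2_def
        using nr ntpos nt0 z0 Npos by (intro frac_le) auto
      also have "\<dots> = v / (1 - z)" unfolding v_def by simp
      also have "\<dots> \<le> v * (1 + 2*z)"
      proof -
        have e: "(1+2*z)*(1-z) = 1 + z*(1-2*z)" by (simp add: algebra_simps)
        have "0 \<le> z*(1-2*z)" using z0 by (intro mult_nonneg_nonneg) auto
        hence "1 \<le> (1 + 2*z) * (1 - z)" using e by linarith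
        hence "v * 1 \<le> v * ((1 + 2*z) * (1 - z))" using v0 by (intro mult_left_mono) auto
        hence "v \<le> v * (1 + 2*z) * (1 - z)" by (simp add: mult.assoc)
        thus ?thesis using z0 by (subst pos_divide_le_eq) auto
      qed
      finally show ?thesis .
    qed
    have "v * (1 + 2 * z) \<le> v * 2" by (intro mult_left_mono) (use z0 v0 in auto)
    hence y2_2v: "y2 \<le> 2 * v" using y2_up by linarith
    have y2_half: "y2 \<le> 1/2" using y2_2v v0 d4 by linarith
    have b1: "1 - k*\<delta> \<le> (real m - k) / m"
    proof -
      have "real k / m = real k * (1/m)" by simp
      also have "\<dots> \<le> real k * \<delta>" using invm by (intro mult_left_mono) auto
      finally have "real k / m \<le> real k * \<delta>" .
      moreover have "(real m - k) / m = 1 - real k / m" using mpos by (simp add: diff_divide_distrib)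
      ultimately show ?thesis by linarith
    qed
    have b0: "0 \<le> 1 - k*\<delta>" using kd by simp
    have PP1: "(1 - k*\<delta>)^k \<le> ((real m - k) / m)^k" by (rule power_mono[OF b1 b0])
    have PP2: "exp (- ((y2 + 2*y2^2) * t)) \<le> (1 - y2) ^ t" by (rule one_minus_ge_exp_pow[OF y2_0 y2_half])
    have PP3: "0 \<le> ((real m - k) / m)^k" by (rule zero_le_power) (use b0 b1 in linarith)
    have "(1 - k*\<delta>)^k * exp (- ((y2 + 2*y2^2) * t)) \<le> ((real m - k) / m)^k * (1 - y2) ^ t"
      by (rule mult_mono[OF PP1 PP2 PP3]) simp
    also have "\<dots> = ((real m - k) / N)^k * (1 - y2) ^ t * (real N / m)^k"
    proof -
      have e: "(real m - k)/N * (real N / m) = (real m - k)/m" using Npos by simp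
      have e2: "((real m - k)/N)^k * (real N / m)^k = ((real m - k)/m)^k"
        by (metis e power_mult_distrib)
      have "((real m - k) / N)^k * (1 - y2) ^ t * (real N / m)^k = (((real m - k)/N)^k * (real N / m)^k) * (1 - y2) ^ t"
        by (simp only: ac_simps)
      thus ?thesis using e2 by simp
    qed
    also have "\<dots> \<le> Pm k N m s * (real N / m)^k"
    proof (intro mult_right_mono)
      have "((real m - k) / N)^k * (1 - y2) ^ t * C \<le> (1 - y2) ^ t * real (n choose r)"
        using R1(1) y2_half by (simp add: mult_left_mono mult.commute mult.left_commute)
      also have "\<dots> \<le> real ((n - t) choose r)" using q(1) unfolding y2_def .
      finally show "((real m - k) / N)^k * (1 - y2) ^ t \<le> Pm k N m s"
        unfolding Pm_eq using Cpos by (simp add: divide_simps)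
    qed auto
    finally have L1: "(1 - k*\<delta>)^k * exp (- ((y2 + 2*y2^2) * t)) \<le> Pm k N m s * (real N / m)^k" .
    have ex: "- ((2*T*(T+1) + 8*T) * \<delta>) \<le> s * v - (y2 + 2*y2^2) * t"
    proof -
      have "(y2 - v) * t \<le> 2 * z * v * t" using y2_up tr by (intro mult_right_mono) (auto simp: algebra_simps)
      also have "\<dots> = (2 * z) * (t * v)" by (simp add: ac_simps)
      also have "\<dots> \<le> 2 * z * T" using tv z0 by (intro mult_left_mono) auto
      finally have A: "(y2 - v) * t \<le> 2 * z * T" .
      have "2 * y2^2 * t \<le> 2 * (2 * v)^2 * t" using y2_0 y2_2v tr by (intro mult_right_mono mult_left_mono power_mono) auto
      also have "\<dots> = 8 * v * (t * v)" by (simp add: power2_eq_square algebra_simps)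
      also have "\<dots> \<le> 8 * \<delta> * T" using v0 tv tr by (intro mult_mono) auto
      finally have B: "2 * y2^2 * t \<le> 8 * \<delta> * T" .
      have Cc: "0 \<le> (real s - real t) * v" using tr v0 by simp
      have "s * v - (y2 + 2*y2^2) * t = (real s - real t) * v - (y2 - v) * t - 2 * y2^2 * t" by (simp add: algebra_simps)
      thus ?thesis using A B Cc unfolding z_def by (simp add: algebra_simps)
    qed
    have "(1 - k*\<delta>)^k * exp (- ((2*T*(T+1) + 8*T) * \<delta>))
        = (1 - k*\<delta>)^k * exp (- ((y2 + 2*y2^2) * t)) * exp (- ((2*T*(T+1) + 8*T) * \<delta>) + (y2 + 2*y2^2) * t)"
      by (simp add: exp_add[symmetric])
    also have "\<dots> \<le> Pm k N m s * (real N / m)^k * exp (s * v)"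
    proof -
      have E: "exp (- ((2*T*(T+1) + 8*T) * \<delta>) + (y2 + 2*y2^2) * t) \<le> exp (s * v)" using ex by simp
      have PN: "0 \<le> Pm k N m s * (real N / m)^k" using mpos by (simp add: Pm_def)
      show ?thesis by (rule mult_mono[OF L1 E PN]) simp
    qed
    finally show ?thesis using expE by simp
  qed
  show ?thesis using up lo by simp
qed



lemma choose_delta:
  fixes T \<epsilon> :: real and k :: nat
  assumes "0 \<le> T" "0 < \<epsilon>"
  shows "\<exists>\<delta>::real. \<delta> > 0 \<and> (k + 1 + T) * \<delta> \<le> 1/4 \<and> 1 - \<epsilon> < (1 - real k * \<delta>)^k * exp (- ((2*T*(T+1) + 8*T) * \<delta>))
           \<and> exp ((k + (k+1)*T) * \<delta>) < 1 + \<epsilon>"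
proof -
  define f1 where "f1 = (\<lambda>\<delta>::real. (1 - k*\<delta>)^k * exp (- ((2*T*(T+1) + 8*T) * \<delta>)))"
  define f2 where "f2 = (\<lambda>\<delta>::real. exp ((k + (k+1)*T) * \<delta>))"
  have c1: "(f1 \<longlongrightarrow> f1 0) (at_right 0)" unfolding f1_def by (intro tendsto_intros)
  have c2: "(f2 \<longlongrightarrow> f2 0) (at_right 0)" unfolding f2_def by (intro tendsto_intros)
  have e1: "eventually (\<lambda>\<delta>. 1 - \<epsilon> < f1 \<delta>) (at_right 0)"
    using order_tendstoD(1)[OF c1, of "1 - \<epsilon>"] assms by (simp add: f1_def)
  have e2: "eventually (\<lambda>\<delta>. f2 \<delta> < 1 + \<epsilon>) (at_right 0)"
    using order_tendstoD(2)[OF c2, of "1 + \<epsilon>"] assms by (simp add: f2_def)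
  have e3: "eventually (\<lambda>\<delta>. (k + 1 + T) * \<delta> \<le> 1/4) (at_right (0::real))"
  proof -
    have "((\<lambda>\<delta>::real. (k + 1 + T) * \<delta>) \<longlongrightarrow> (k+1+T) * 0) (at_right 0)" by (intro tendsto_intros)
    from order_tendstoD(2)[OF this, of "1/4"] show ?thesis by (auto elim: eventually_mono)
  qed
  have "eventually (\<lambda>\<delta>. 1 - \<epsilon> < f1 \<delta> \<and> f2 \<delta> < 1 + \<epsilon> \<and> (k + 1 + T) * \<delta> \<le> 1/4) (at_right (0::real))"
    using e1 e2 e3 by eventually_elim auto
  then obtain b where b: "b > 0" "\<And>y. 0 < y \<Longrightarrow> y < b \<Longrightarrow> 1 - \<epsilon> < f1 y \<and> f2 y < 1 + \<epsilon> \<and> (k + 1 + T) * y \<le> 1/4"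
    unfolding eventually_at_right_field by auto
  show ?thesis using b(2)[of "b/2"] b(1) unfolding f1_def f2_def by (intro exI[of _ "b/2"]) auto
qed



definition tagv :: "real \<Rightarrow> ('j::finite \<Rightarrow> nat) \<Rightarrow> real^'j" where
  "tagv \<mu> a = (\<chi> i. real (a i) / \<mu>)"
definition cellv :: "real \<Rightarrow> ('j::finite \<Rightarrow> nat) \<Rightarrow> (real^'j) set" where
  "cellv \<mu> a = cbox (\<chi> i. (real (a i) - 1) / \<mu>) (\<chi> i. real (a i) / \<mu>)"
definition gridD :: "real \<Rightarrow> nat \<Rightarrow> ((real^'j::finite) \<times> (real^'j) set) set" where
  "gridD \<mu> L = (\<lambda>a. (tagv \<mu> a, cellv \<mu> a)) ` (PiE UNIV (\<lambda>_::'j. {1..L}))"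

lemma mem_cellv: "0 < \<mu> \<Longrightarrow> x \<in> cellv \<mu> a \<longleftrightarrow> (\<forall>i. (real (a i) - 1) / \<mu> \<le> x$i \<and> x$i \<le> real (a i) / \<mu>)"
  unfolding cellv_def by (simp add: mem_box_cart)

lemma tag_in_cell: "0 < \<mu> \<Longrightarrow> tagv \<mu> a \<in> cellv \<mu> a"
  by (simp add: mem_cellv tagv_def divide_right_mono)

lemma content_cellv: "0 < \<mu> \<Longrightarrow> measure lborel (cellv \<mu> (a::'j::finite \<Rightarrow> nat)) = (1/\<mu>) ^ CARD('j)"
proof -
  assume mu: "0 < \<mu>"
  have ne: "cellv \<mu> a \<noteq> {}" using tag_in_cell[OF mu] by blast
  have "measure lborel (cellv \<mu> a) = (\<Prod>i\<in>UNIV. real (a i) / \<mu> - (real (a i) - 1) / \<mu>)"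
    using ne unfolding cellv_def by (subst content_cbox_cart) auto
  also have "\<dots> = (\<Prod>i\<in>(UNIV::'j set). 1/\<mu>)" by (intro prod.cong) (auto simp: diff_divide_distrib)
  finally show ?thesis by simp
qed

lemma cellv_disjoint:
  assumes mu: "0 < \<mu>" and ne: "a \<noteq> b"
  shows "interior (cellv \<mu> a) \<inter> interior (cellv \<mu> (b::'j::finite \<Rightarrow> nat)) = {}"
proof -
  obtain i where i: "a i \<noteq> b i" using ne by auto
  show ?thesis
  proof (rule ccontr)
    assume "interior (cellv \<mu> a) \<inter> interior (cellv \<mu> b) \<noteq> {}"
    then obtain x where x: "x \<in> box (\<chi> i. (real (a i) - 1) / \<mu>) (\<chi> i. real (a i) / \<mu>)"
                          "x \<in> box (\<chi> i. (real (b i) - 1) / \<mu>) (\<chi> i. real (b i) / \<mu>)"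
      unfolding cellv_def by auto
    hence xa: "(real (a i) - 1) / \<mu> < x$i" "x$i < real (a i) / \<mu>"
      and xb: "(real (b i) - 1) / \<mu> < x$i" "x$i < real (b i) / \<mu>"
      by (auto simp: mem_box_cart)
    show False
    proof (cases "a i < b i")
      case True
      hence "real (a i) \<le> real (b i) - 1" by linarith
      hence "real (a i) / \<mu> \<le> (real (b i) - 1) / \<mu>" using mu by (simp add: divide_right_mono)
      thus False using xa xb by linarith
    next
      case False
      hence "b i < a i" using i by simp
      hence "real (b i) \<le> real (a i) - 1" by linarith
      hence "real (b i) / \<mu> \<le> (real (a i) - 1) / \<mu>" using mu by (simp add: divide_right_mono)
      thus False using xa xb by linarith
    qed
  qed
qed

lemma gridD_division:
  fixes \<mu> :: real and L :: nat
  assumes mu: "0 < \<mu>" and L: "1 \<le> L"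
  shows "(gridD \<mu> L :: ((real^'j::finite) \<times> _) set) tagged_division_of cbox 0 (\<chi> i. real L / \<mu>)"
proof (rule tagged_division_ofI)
  show "finite (gridD \<mu> L :: ((real^'j::finite) \<times> _) set)" unfolding gridD_def by (simp add: finite_PiE)
next
  fix x K assume "(x, K) \<in> (gridD \<mu> L :: ((real^'j::finite) \<times> _) set)"
  then obtain a where a: "a \<in> PiE UNIV (\<lambda>_::'j. {1..L})" "x = tagv \<mu> a" "K = cellv \<mu> a" unfolding gridD_def by auto
  show "x \<in> K" using a tag_in_cell[OF mu] by simp
  show "\<exists>a b. K = cbox a b" using a unfolding cellv_def by blast
  show "K \<subseteq> cbox 0 (\<chi> i. real L / \<mu>)"
  proof
    fix y assume "y \<in> K"
    hence y: "\<forall>i. (real (a i) - 1) / \<mu> \<le> y$i \<and> y$i \<le> real (a i) / \<mu>" using a mem_cellv[OF mu] by auto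
    have "\<forall>i. 0 \<le> y$i \<and> y$i \<le> real L / \<mu>"
    proof
      fix i
      have ai: "1 \<le> a i" "a i \<le> L" using a(1) by (auto simp: PiE_iff)
      have "0 \<le> (real (a i) - 1) / \<mu>" using ai mu by simp
      moreover have "real (a i) / \<mu> \<le> real L / \<mu>" using ai mu by (simp add: divide_right_mono)
      ultimately show "0 \<le> y$i \<and> y$i \<le> real L / \<mu>" using y by (meson order_trans)
    qed
    thus "y \<in> cbox 0 (\<chi> i. real L / \<mu>)" by (simp add: mem_box_cart)
  qed
next
  fix x1 K1 x2 K2
  assume "(x1, K1) \<in> (gridD \<mu> L :: ((real^'j::finite) \<times> _) set)" "(x2, K2) \<in> (gridD \<mu> L :: ((real^'j::finite) \<times> _) set)"
     and ne: "(x1, K1) \<noteq> (x2, K2)"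
  then obtain a b where a: "x1 = tagv \<mu> a" "K1 = cellv \<mu> a" and b: "x2 = tagv \<mu> b" "K2 = cellv \<mu> b"
    unfolding gridD_def by auto
  have "a \<noteq> b" using ne a b by auto
  thus "interior K1 \<inter> interior K2 = {}" using cellv_disjoint[OF mu] a b by simp
next
  show "\<Union>{K. \<exists>x. (x, K) \<in> (gridD \<mu> L :: ((real^'j::finite) \<times> _) set)} = cbox 0 (\<chi> i. real L / \<mu>)"
  proof (rule set_eqI, rule iffI)
    fix y assume "y \<in> \<Union>{K. \<exists>x. (x, K) \<in> (gridD \<mu> L :: ((real^'j::finite) \<times> _) set)}"
    then obtain a where a: "a \<in> PiE UNIV (\<lambda>_::'j. {1..L})" "y \<in> cellv \<mu> a" unfolding gridD_def by auto
    hence y: "\<forall>i. (real (a i) - 1) / \<mu> \<le> y$i \<and> y$i \<le> real (a i) / \<mu>" using mem_cellv[OF mu] by auto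
    have "\<forall>i. 0 \<le> y$i \<and> y$i \<le> real L / \<mu>"
    proof
      fix i
      have ai: "1 \<le> a i" "a i \<le> L" using a(1) by (auto simp: PiE_iff)
      have "0 \<le> (real (a i) - 1) / \<mu>" using ai mu by simp
      moreover have "real (a i) / \<mu> \<le> real L / \<mu>" using ai mu by (simp add: divide_right_mono)
      ultimately show "0 \<le> y$i \<and> y$i \<le> real L / \<mu>" using y by (meson order_trans)
    qed
    thus "y \<in> cbox 0 (\<chi> i. real L / \<mu>)" by (simp add: mem_box_cart)
  next
    fix y :: "real^'j" assume "y \<in> cbox 0 (\<chi> i. real L / \<mu>)"
    hence y: "\<forall>i. 0 \<le> y$i \<and> y$i \<le> real L / \<mu>" by (simp add: mem_box_cart)
    define a where "a = (\<lambda>i. max 1 (nat \<lceil>\<mu> * y$i\<rceil>))"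
    have aL: "a \<in> PiE UNIV (\<lambda>_::'j. {1..L})"
    proof -
      have "a i \<in> {1..L}" for i
      proof -
        have h1: "\<mu> * y$i \<le> real L" using y mu by (simp add: mult.commute pos_le_divide_eq)
        hence "\<lceil>\<mu> * y$i\<rceil> \<le> int L" by (intro ceiling_le) simp
        thus ?thesis using L h1 unfolding a_def by auto
      qed
      thus ?thesis by auto
    qed
    have "y \<in> cellv \<mu> a"
    proof -
      have "(real (a i) - 1) / \<mu> \<le> y$i \<and> y$i \<le> real (a i) / \<mu>" for i
      proof -
        have c1: "\<mu> * y$i \<le> of_int \<lceil>\<mu> * y$i\<rceil>" by (rule le_of_int_ceiling)
        have c2: "of_int \<lceil>\<mu> * y$i\<rceil> < \<mu> * y$i + 1" by linarith
        have ypos: "0 \<le> \<mu> * y$i" using y mu by simp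
        have ai: "real (a i) = max 1 (of_int \<lceil>\<mu> * y$i\<rceil>)"
        proof (cases "\<mu> * y$i = 0")
          case True thus ?thesis unfolding a_def by simp
        next
          case False
          hence "0 < \<mu> * y$i" using ypos by linarith
          hence cg: "1 \<le> \<lceil>\<mu> * y$i\<rceil>" by (simp add: Suc_le_eq)
          hence "a i = nat \<lceil>\<mu> * y$i\<rceil>" unfolding a_def by (simp add: max_def) linarith
          thus ?thesis using cg by simp
        qed
        have "real (a i) - 1 \<le> \<mu> * y$i" using ai c2 ypos by (auto simp: max_def)
        moreover have "\<mu> * y$i \<le> real (a i)" using ai c1 by (auto simp: max_def)
        ultimately show ?thesis using mu by (auto simp: pos_divide_le_eq pos_le_divide_eq mult.commute)
      qed
      thus ?thesis using mem_cellv[OF mu] by blast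
    qed
    thus "y \<in> \<Union>{K. \<exists>x. (x, K) \<in> (gridD \<mu> L :: ((real^'j::finite) \<times> _) set)}"
      using aL unfolding gridD_def by blast
  qed
qed



definition wexp :: "real^'j::finite \<Rightarrow> real" where
  "wexp x = exp (- (\<Sum>i\<in>UNIV. x$i))"

lemma continuous_wexp: "continuous_on S wexp"
  unfolding wexp_def by (intro continuous_intros)

lemma int_times_cont:
  fixes g h :: "real^'j::finite \<Rightarrow> real"
  assumes gi: "g integrable_on cbox a b" and gnn: "\<forall>x\<in>cbox a b. 0 \<le> g x" and hc: "continuous_on (cbox a b) h"
  shows "(\<lambda>x. g x * h x) integrable_on cbox a b"
proof -
  have ga: "g absolutely_integrable_on cbox a b"
    using gi gnn by (intro nonnegative_absolutely_integrable) auto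
  have hm: "h \<in> borel_measurable (lebesgue_on (cbox a b))"
    by (intro continuous_imp_measurable_on_sets_lebesgue hc) simp
  have hb: "bounded (h ` cbox a b)"
    by (intro compact_imp_bounded compact_continuous_image hc) simp
  have "(\<lambda>x. h x * g x) absolutely_integrable_on cbox a b"
  proof -
    have cb: "cbox a b \<in> sets lebesgue" by simp
    show ?thesis by (rule absolutely_integrable_bounded_measurable_product[OF bilinear_times hm cb hb ga])
  qed
  hence "(\<lambda>x. h x * g x) integrable_on cbox a b" by (simp add: absolutely_integrable_on_def)
  thus ?thesis by (simp add: mult.commute)
qed

lemma exp_neg_lipschitz:
  fixes s1 s2 :: real
  assumes "0 \<le> s1" "0 \<le> s2"
  shows "\<bar>exp (- s1) - exp (- s2)\<bar> \<le> \<bar>s1 - s2\<bar>"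
proof -
  have key: "exp (- a) - exp (- b) \<le> b - a" if "0 \<le> a" "a \<le> b" for a b :: real
  proof -
    have "exp (- a) - exp (- b) = exp (- a) * (1 - exp (- (b - a)))"
      by (simp add: algebra_simps exp_diff[symmetric] exp_add[symmetric])
    also have "\<dots> \<le> 1 * (b - a)"
    proof (rule mult_mono)
      show "exp (- a) \<le> 1" using that by simp
      have "1 + (a - b) \<le> exp (a - b)" by (rule exp_ge_add_one_self)
      moreover have "exp (- (b - a)) = exp (a - b)" by simp
      ultimately show "1 - exp (- (b - a)) \<le> b - a" by linarith
    qed (use that in auto)
    finally show ?thesis by simp
  qed
  show ?thesis
  proof (cases "s1 \<le> s2")
    case True
    have "exp (- s2) \<le> exp (- s1)" using True by simp
    hence "0 \<le> exp (- s1) - exp (- s2)" by linarith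
    thus ?thesis using key[OF assms(1) True] True by simp
  next
    case False
    have "exp (- s1) \<le> exp (- s2)" using False by simp
    hence "0 \<le> exp (- s2) - exp (- s1)" by linarith
    thus ?thesis using key[OF assms(2)] False by simp
  qed
qed

lemma tagv_inj: "0 < \<mu> \<Longrightarrow> inj_on (\<lambda>a. (tagv \<mu> a, cellv \<mu> (a::'j::finite \<Rightarrow> nat))) A"
proof (rule inj_onI)
  fix a b assume mu: "0 < \<mu>" and e: "(tagv \<mu> a, cellv \<mu> a) = (tagv \<mu> b, cellv \<mu> (b::'j \<Rightarrow> nat))"
  show "a = b"
  proof
    fix i
    have "tagv \<mu> a $ i = tagv \<mu> b $ i" using e by simp
    hence "real (a i) / \<mu> = real (b i) / \<mu>" by (simp add: tagv_def)
    thus "a i = b i" using mu by simp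
  qed
qed



lemma partial_division_mono:
  "s tagged_division_of i \<Longrightarrow> i \<subseteq> j \<Longrightarrow> s tagged_partial_division_of j"
  unfolding tagged_division_of_def tagged_partial_division_of_def by blast

lemma sum_over_gridD:
  assumes "0 < \<mu>"
  shows "(\<Sum>(x,K)\<in>(gridD \<mu> L :: ((real^'j::finite) \<times> _) set). F x K) = (\<Sum>a\<in>PiE UNIV (\<lambda>_::'j. {1..L}). F (tagv \<mu> a) (cellv \<mu> a))"
  unfolding gridD_def by (subst sum.reindex[OF tagv_inj[OF assms]]) simp

lemma riemann_grid:
  fixes g :: "real^'j::finite \<Rightarrow> real" and K :: real
  assumes K: "0 < K" and gr: "riemann_integrable_on g (cbox 0 (\<chi> i. K))"
    and gnn: "\<forall>x\<in>orthant. 0 \<le> g x"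
  shows "\<forall>\<epsilon>>0. \<exists>\<mu>0>0. \<forall>\<mu> L. \<mu>0 \<le> \<mu> \<and> 1 \<le> L \<and> real L / \<mu> \<le> K \<longrightarrow>
     \<bar>(\<Sum>a\<in>PiE UNIV (\<lambda>_::'j. {1..L}). g (tagv \<mu> a) * wexp (tagv \<mu> a)) * (1/\<mu>)^CARD('j)
        - integral (cbox 0 (\<chi> i. real L / \<mu>)) (\<lambda>x. g x * wexp x)\<bar> \<le> \<epsilon>"
proof (intro allI impI)
  fix \<epsilon> :: real assume eps: "0 < \<epsilon>"
  define B0 :: "(real^'j) set" where "B0 = cbox 0 (\<chi> i. K)"
  define k where "k = CARD('j)"
  have B0_orth: "B0 \<subseteq> orthant" unfolding B0_def orthant_def by (auto simp: mem_box_cart)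
  obtain I where I: "\<forall>e>0. \<exists>\<delta>>0. \<forall>D. D tagged_division_of B0 \<and> (\<lambda>x. ball x \<delta>) fine D \<longrightarrow>
        \<bar>(\<Sum>(x,K)\<in>D. measure lborel K * g x) - I\<bar> < e"
    using gr unfolding riemann_integrable_on_def B0_def by blast
  have hasI: "(g has_integral I) B0"
    unfolding B0_def has_integral
  proof (intro allI impI)
    fix e :: real assume "0 < e"
    then obtain \<delta> where "\<delta> > 0" and d: "\<forall>D. D tagged_division_of B0 \<and> (\<lambda>x. ball x \<delta>) fine D \<longrightarrow>
        \<bar>(\<Sum>(x,K)\<in>D. measure lborel K * g x) - I\<bar> < e" using I by blast
    show "\<exists>\<gamma>. gauge \<gamma> \<and> (\<forall>\<D>. \<D> tagged_division_of cbox 0 (\<chi> i. K) \<and> \<gamma> fine \<D> \<longrightarrow>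
           norm ((\<Sum>(x, k)\<in>\<D>. measure lborel k *\<^sub>R g x) - I) < e)"
      using d \<open>\<delta> > 0\<close> unfolding B0_def by (intro exI[of _ "\<lambda>x. ball x \<delta>"]) auto
  qed
  have gi: "g integrable_on B0" using hasI by blast
  have intI: "integral B0 g = I" using hasI by (rule integral_unique)
  obtain \<delta> where d0: "\<delta> > 0" and d: "\<forall>D. D tagged_division_of B0 \<and> (\<lambda>x. ball x \<delta>) fine D \<longrightarrow>
        \<bar>(\<Sum>(x,K)\<in>D. measure lborel K * g x) - I\<bar> < \<epsilon>/4" using I eps by (meson divide_pos_pos zero_less_numeral)
  define J where "J = integral B0 g"
  have J0: "0 \<le> J" unfolding J_def using gi gnn B0_orth by (intro integral_nonneg) auto
  define \<mu>0 where "\<mu>0 = (k + 1) / \<delta> + 2 * k * (J + 1) / \<epsilon> + 1"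
  have mu0: "0 < \<mu>0" unfolding \<mu>0_def using d0 eps J0 by (intro add_nonneg_pos add_nonneg_nonneg) auto
  show "\<exists>\<mu>0>0. \<forall>\<mu> L. \<mu>0 \<le> \<mu> \<and> 1 \<le> L \<and> real L / \<mu> \<le> K \<longrightarrow>
     \<bar>(\<Sum>a\<in>PiE UNIV (\<lambda>_::'j. {1..L}). g (tagv \<mu> a) * wexp (tagv \<mu> a)) * (1/\<mu>)^CARD('j)
        - integral (cbox 0 (\<chi> i. real L / \<mu>)) (\<lambda>x. g x * wexp x)\<bar> \<le> \<epsilon>"
  proof (intro exI[of _ \<mu>0] conjI mu0 allI impI)
    fix \<mu> :: real and L :: nat
    assume as: "\<mu>0 \<le> \<mu> \<and> 1 \<le> L \<and> real L / \<mu> \<le> K"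
    have mu: "0 < \<mu>" using as mu0 by linarith
    have L1: "1 \<le> L" using as by simp
    define B' :: "(real^'j) set" where "B' = cbox 0 (\<chi> i. real L / \<mu>)"
    define A where "A = PiE UNIV (\<lambda>_::'j. {1..L})"
    define D :: "((real^'j) \<times> _) set" where "D = gridD \<mu> L"
    have B'B0: "B' \<subseteq> B0"
    proof
      fix x assume "x \<in> B'"
      hence "\<forall>i. 0 \<le> x $ i \<and> x $ i \<le> real L / \<mu>" unfolding B'_def by (simp add: mem_box_cart)
      thus "x \<in> B0" using as unfolding B0_def by (simp add: mem_box_cart) (meson order_trans)
    qed
    have divD: "D tagged_division_of B'" unfolding D_def B'_def by (rule gridD_division[OF mu L1])
    have partD: "D tagged_partial_division_of B0" by (rule partial_division_mono[OF divD B'B0])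
    have kmu: "k / \<mu> < \<delta>"
    proof -
      have "(k+1)/\<delta> \<le> \<mu>" using as eps J0 d0 unfolding \<mu>0_def
        by (smt (verit) divide_nonneg_pos mult_nonneg_nonneg of_nat_0_le_iff)
      hence "k + 1 \<le> \<mu> * \<delta>" using d0 by (simp add: pos_divide_le_eq)
      hence "k < \<mu> * \<delta>" by linarith
      thus ?thesis using mu by (simp add: pos_divide_less_eq mult.commute)
    qed
    have cell_close: "\<bar>tagv \<mu> a $ i - y $ i\<bar> \<le> 1 / \<mu>" if "y \<in> cellv \<mu> a" for a :: "'j \<Rightarrow> nat" and y i
    proof -
      have "(real (a i) - 1) / \<mu> \<le> y$i" "y$i \<le> real (a i) / \<mu>" using that mem_cellv[OF mu] by auto
      moreover have "real (a i) / \<mu> - (real (a i) - 1) / \<mu> = 1 / \<mu>" by (simp add: diff_divide_distrib)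
      ultimately show ?thesis by (simp add: tagv_def abs_le_iff)
    qed
    have l1_close: "(\<Sum>i\<in>UNIV. \<bar>tagv \<mu> a $ i - y $ i\<bar>) \<le> k / \<mu>" if "y \<in> cellv \<mu> a" for a :: "'j \<Rightarrow> nat" and y
    proof -
      have "(\<Sum>i\<in>UNIV. \<bar>tagv \<mu> a $ i - y $ i\<bar>) \<le> (\<Sum>i\<in>(UNIV::'j set). 1 / \<mu>)"
        by (rule sum_mono) (rule cell_close[OF that])
      thus ?thesis unfolding k_def by simp
    qed
    have fineD: "(\<lambda>x. ball x \<delta>) fine D"
    proof (rule fineI)
      fix x C assume "(x, C) \<in> D"
      then obtain a where a: "x = tagv \<mu> a" "C = cellv \<mu> a" unfolding D_def gridD_def by auto
      show "C \<subseteq> ball x \<delta>"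
      proof
        fix y assume y: "y \<in> C"
        have "dist x y = norm (x - y)" by (simp add: dist_norm)
        also have "\<dots> \<le> (\<Sum>i\<in>UNIV. \<bar>(x - y) $ i\<bar>)" by (rule norm_le_l1_cart)
        also have "\<dots> \<le> k / \<mu>" using l1_close[of y a] y a by simp
        finally show "y \<in> ball x \<delta>" using kmu by simp
      qed
    qed
    have H: "(\<Sum>(x,C)\<in>D. norm (measure lborel C *\<^sub>R g x - integral C g)) \<le> 2 * real DIM(real) * (\<epsilon>/4)"
    proof (rule Henstock_lemma_part2[of g _ _ "\<epsilon>/4" "\<lambda>x. ball x \<delta>"])
      show "g integrable_on cbox 0 (\<chi> i. K)" using gi unfolding B0_def .
      show "0 < \<epsilon>/4" using eps by simp
      show "gauge (\<lambda>x. ball x \<delta>)" using d0 by auto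
      show "D tagged_partial_division_of cbox 0 (\<chi> i. K)" using partD unfolding B0_def .
      show "(\<lambda>x. ball x \<delta>) fine D" by (rule fineD)
      fix \<D> :: "((real^'j) \<times> (real^'j) set) set"
      assume "\<D> tagged_division_of cbox 0 (\<chi> i. K)" "(\<lambda>x. ball x \<delta>) fine \<D>"
      thus "norm ((\<Sum>(x, k)\<in>\<D>. measure lborel k *\<^sub>R g x) - integral (cbox 0 (\<chi> i. K)) g) < \<epsilon> / 4"
        using d intI unfolding B0_def by auto
    qed
    have H2: "(\<Sum>a\<in>A. \<bar>(1/\<mu>)^k * g (tagv \<mu> a) - integral (cellv \<mu> a) g\<bar>) \<le> \<epsilon>/2"
    proof -
      have "(\<Sum>(x,C)\<in>D. norm (measure lborel C *\<^sub>R g x - integral C g))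
          = (\<Sum>a\<in>A. \<bar>(1/\<mu>)^k * g (tagv \<mu> a) - integral (cellv \<mu> a) g\<bar>)"
        unfolding D_def A_def by (subst sum_over_gridD[OF mu]) (simp add: content_cellv[OF mu] k_def)
      thus ?thesis using H by simp
    qed
    have gB': "g integrable_on B'" using gi B'B0 unfolding B'_def by (rule integrable_on_subcbox)
    have gwB0: "(\<lambda>x. g x * wexp x) integrable_on B0"
      unfolding B0_def by (rule int_times_cont) (use gi gnn B0_orth continuous_wexp in \<open>auto simp: B0_def\<close>)
    have gwB': "(\<lambda>x. g x * wexp x) integrable_on B'" using gwB0 B'B0 unfolding B'_def by (rule integrable_on_subcbox)
    have cellB': "cellv \<mu> a \<subseteq> B'" if "a \<in> A" for a
      using divD that unfolding D_def gridD_def A_def tagged_division_of_def tagged_partial_division_of_def by blast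
    have cell_orth: "cellv \<mu> a \<subseteq> orthant" if "a \<in> A" for a using cellB'[OF that] B'B0 B0_orth by blast
    have g_cell: "g integrable_on cellv \<mu> a" if "a \<in> A" for a
      using gB' cellB'[OF that] unfolding cellv_def by (rule integrable_on_subcbox)
    have gw_cell: "(\<lambda>x. g x * wexp x) integrable_on cellv \<mu> a" if "a \<in> A" for a
      using gwB' cellB'[OF that] unfolding cellv_def by (rule integrable_on_subcbox)
    have intgw: "integral B' (\<lambda>x. g x * wexp x) = (\<Sum>a\<in>A. integral (cellv \<mu> a) (\<lambda>x. g x * wexp x))"
      using integral_combine_tagged_division_topdown[OF gwB'[unfolded B'_def] divD[unfolded B'_def]]
      unfolding D_def A_def B'_def by (simp add: sum_over_gridD[OF mu])
    have intg: "integral B' g = (\<Sum>a\<in>A. integral (cellv \<mu> a) g)"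
      using integral_combine_tagged_division_topdown[OF gB'[unfolded B'_def] divD[unfolded B'_def]]
      unfolding D_def A_def B'_def by (simp add: sum_over_gridD[OF mu])
    have w01: "0 \<le> wexp x" "wexp x \<le> 1" if "x \<in> orthant" for x :: "real^'j"
    proof -
      show "0 \<le> wexp x" unfolding wexp_def by simp
      have "0 \<le> (\<Sum>i\<in>UNIV. x$i)" using that unfolding orthant_def by (intro sum_nonneg) auto
      thus "wexp x \<le> 1" unfolding wexp_def by simp
    qed
    have tag_orth: "tagv \<mu> a \<in> orthant" for a :: "'j \<Rightarrow> nat"
      unfolding orthant_def tagv_def using mu by simp
    have lip: "\<bar>wexp (tagv \<mu> a) - wexp y\<bar> \<le> k / \<mu>" if "a \<in> A" "y \<in> cellv \<mu> a" for a y
    proof -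
      have y0: "y \<in> orthant" using cell_orth that by blast
      have s1: "0 \<le> (\<Sum>i\<in>UNIV. tagv \<mu> a $ i)" using tag_orth[of a] unfolding orthant_def by (intro sum_nonneg) auto
      have s2: "0 \<le> (\<Sum>i\<in>UNIV. y $ i)" using y0 unfolding orthant_def by (intro sum_nonneg) auto
      have "\<bar>wexp (tagv \<mu> a) - wexp y\<bar> \<le> \<bar>(\<Sum>i\<in>UNIV. tagv \<mu> a $ i) - (\<Sum>i\<in>UNIV. y $ i)\<bar>"
        unfolding wexp_def by (rule exp_neg_lipschitz[OF s1 s2])
      also have "\<dots> = \<bar>\<Sum>i\<in>UNIV. tagv \<mu> a $ i - y $ i\<bar>" by (simp add: sum_subtractf)
      also have "\<dots> \<le> (\<Sum>i\<in>UNIV. \<bar>tagv \<mu> a $ i - y $ i\<bar>)" by (rule sum_abs)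
      also have "\<dots> \<le> k / \<mu>" by (rule l1_close[OF that(2)])
      finally show ?thesis .
    qed
    have per_cell: "\<bar>wexp (tagv \<mu> a) * integral (cellv \<mu> a) g - integral (cellv \<mu> a) (\<lambda>x. g x * wexp x)\<bar>
                    \<le> k / \<mu> * integral (cellv \<mu> a) g" if a: "a \<in> A" for a
    proof -
      let ?t = "tagv \<mu> a"
      have i1: "(\<lambda>y. g y * wexp ?t) integrable_on cellv \<mu> a" using g_cell[OF a] by (rule integrable_on_mult_left)
      have "wexp ?t * integral (cellv \<mu> a) g - integral (cellv \<mu> a) (\<lambda>x. g x * wexp x)
          = integral (cellv \<mu> a) (\<lambda>y. g y * wexp ?t) - integral (cellv \<mu> a) (\<lambda>x. g x * wexp x)"
        by (simp add: mult.commute)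
      also have "\<dots> = integral (cellv \<mu> a) (\<lambda>y. g y * wexp ?t - g y * wexp y)"
        by (rule integral_diff[symmetric, OF i1 gw_cell[OF a]])
      finally have eq: "wexp ?t * integral (cellv \<mu> a) g - integral (cellv \<mu> a) (\<lambda>x. g x * wexp x)
          = integral (cellv \<mu> a) (\<lambda>y. g y * wexp ?t - g y * wexp y)" .
      have "norm (integral (cellv \<mu> a) (\<lambda>y. g y * wexp ?t - g y * wexp y)) \<le> integral (cellv \<mu> a) (\<lambda>y. g y * (k / \<mu>))"
      proof (rule integral_norm_bound_integral)
        show "(\<lambda>y. g y * wexp ?t - g y * wexp y) integrable_on cellv \<mu> a" by (rule integrable_diff[OF i1 gw_cell[OF a]])
        show "(\<lambda>y. g y * (k / \<mu>)) integrable_on cellv \<mu> a" using g_cell[OF a] by (rule integrable_on_mult_left)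
        fix y assume y: "y \<in> cellv \<mu> a"
        have gy: "0 \<le> g y" using gnn cell_orth[OF a] y by blast
        have "norm (g y * wexp ?t - g y * wexp y) = g y * \<bar>wexp ?t - wexp y\<bar>"
          using gy by (simp add: abs_mult right_diff_distrib[symmetric])
        also have "\<dots> \<le> g y * (k / \<mu>)" using gy lip[OF a y] by (intro mult_left_mono) auto
        finally show "norm (g y * wexp ?t - g y * wexp y) \<le> g y * (k / \<mu>)" .
      qed
      also have "\<dots> = k / \<mu> * integral (cellv \<mu> a) g" by (simp add: mult.commute)
      finally show ?thesis using eq by simp
    qed
    have RS_eq: "(\<Sum>a\<in>A. g (tagv \<mu> a) * wexp (tagv \<mu> a)) * (1/\<mu>)^k - integral B' (\<lambda>x. g x * wexp x)
        = (\<Sum>a\<in>A. wexp (tagv \<mu> a) * ((1/\<mu>)^k * g (tagv \<mu> a) - integral (cellv \<mu> a) g))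
        + (\<Sum>a\<in>A. wexp (tagv \<mu> a) * integral (cellv \<mu> a) g - integral (cellv \<mu> a) (\<lambda>x. g x * wexp x))"
      unfolding intgw sum_distrib_right
      by (simp add: sum_subtractf[symmetric] sum.distrib[symmetric] algebra_simps)
    have T1: "\<bar>\<Sum>a\<in>A. wexp (tagv \<mu> a) * ((1/\<mu>)^k * g (tagv \<mu> a) - integral (cellv \<mu> a) g)\<bar> \<le> \<epsilon>/2"
    proof -
      have "\<bar>\<Sum>a\<in>A. wexp (tagv \<mu> a) * ((1/\<mu>)^k * g (tagv \<mu> a) - integral (cellv \<mu> a) g)\<bar>
          \<le> (\<Sum>a\<in>A. \<bar>wexp (tagv \<mu> a) * ((1/\<mu>)^k * g (tagv \<mu> a) - integral (cellv \<mu> a) g)\<bar>)" by (rule sum_abs)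
      also have "\<dots> \<le> (\<Sum>a\<in>A. \<bar>(1/\<mu>)^k * g (tagv \<mu> a) - integral (cellv \<mu> a) g\<bar>)"
      proof (rule sum_mono)
        fix a assume "a \<in> A"
        have "0 \<le> wexp (tagv \<mu> a)" "wexp (tagv \<mu> a) \<le> 1" using w01[OF tag_orth[of a]] by auto
        thus "\<bar>wexp (tagv \<mu> a) * ((1/\<mu>)^k * g (tagv \<mu> a) - integral (cellv \<mu> a) g)\<bar>
             \<le> \<bar>(1/\<mu>)^k * g (tagv \<mu> a) - integral (cellv \<mu> a) g\<bar>"
          by (simp add: abs_mult mult_left_le_one_le)
      qed
      also have "\<dots> \<le> \<epsilon>/2" by (rule H2)
      finally show ?thesis .
    qed
    have T2: "\<bar>\<Sum>a\<in>A. wexp (tagv \<mu> a) * integral (cellv \<mu> a) g - integral (cellv \<mu> a) (\<lambda>x. g x * wexp x)\<bar> \<le> \<epsilon>/2"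
    proof -
      have "\<bar>\<Sum>a\<in>A. wexp (tagv \<mu> a) * integral (cellv \<mu> a) g - integral (cellv \<mu> a) (\<lambda>x. g x * wexp x)\<bar>
          \<le> (\<Sum>a\<in>A. \<bar>wexp (tagv \<mu> a) * integral (cellv \<mu> a) g - integral (cellv \<mu> a) (\<lambda>x. g x * wexp x)\<bar>)" by (rule sum_abs)
      also have "\<dots> \<le> (\<Sum>a\<in>A. k / \<mu> * integral (cellv \<mu> a) g)" by (intro sum_mono per_cell)
      also have "\<dots> = k / \<mu> * integral B' g" unfolding intg by (simp add: sum_distrib_left)
      also have "\<dots> \<le> k / \<mu> * J"
      proof (intro mult_left_mono)
        show "integral B' g \<le> J" unfolding J_def
          using gB' gi B'B0 gnn B0_orth by (intro integral_subset_le) auto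
      qed (use mu in simp)
      also have "\<dots> \<le> \<epsilon>/2"
      proof -
        have "2 * k * (J + 1) / \<epsilon> \<le> \<mu>" using as d0 unfolding \<mu>0_def
          by (smt (verit) divide_nonneg_pos of_nat_0_le_iff)
        hence "2 * k * (J + 1) \<le> \<mu> * \<epsilon>" using eps by (simp add: pos_divide_le_eq)
        hence "2 * k * J \<le> \<mu> * \<epsilon>" using J0 by (smt (verit) mult_left_mono of_nat_0_le_iff distrib_left mult_nonneg_nonneg)
        hence "k * J / \<mu> \<le> \<epsilon> / 2" using mu by (simp add: pos_divide_le_eq mult.commute)
        thus ?thesis by simp
      qed
      finally show ?thesis .
    qed
    show "\<bar>(\<Sum>a\<in>PiE UNIV (\<lambda>_::'j. {1..L}). g (tagv \<mu> a) * wexp (tagv \<mu> a)) * (1/\<mu>)^CARD('j)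
        - integral (cbox 0 (\<chi> i. real L / \<mu>)) (\<lambda>x. g x * wexp x)\<bar> \<le> \<epsilon>"
      using RS_eq T1 T2 unfolding A_def B'_def k_def by linarith
  qed
qed



lemma riemann_has_integral:
  fixes g :: "real^'j::finite \<Rightarrow> real"
  assumes "riemann_integrable_on g (cbox a b)"
  shows "g integrable_on cbox a b"
proof -
  obtain I where I: "\<forall>e>0. \<exists>\<delta>>0. \<forall>D. D tagged_division_of (cbox a b) \<and> (\<lambda>x. ball x \<delta>) fine D \<longrightarrow>
        \<bar>(\<Sum>(x,K)\<in>D. measure lborel K * g x) - I\<bar> < e"
    using assms unfolding riemann_integrable_on_def by blast
  have "(g has_integral I) (cbox a b)"
    unfolding has_integral
  proof (intro allI impI)
    fix e :: real assume "0 < e"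
    then obtain \<delta> where "\<delta> > 0" and d: "\<forall>D. D tagged_division_of (cbox a b) \<and> (\<lambda>x. ball x \<delta>) fine D \<longrightarrow>
        \<bar>(\<Sum>(x,K)\<in>D. measure lborel K * g x) - I\<bar> < e" using I by blast
    show "\<exists>\<gamma>. gauge \<gamma> \<and> (\<forall>\<D>. \<D> tagged_division_of cbox a b \<and> \<gamma> fine \<D> \<longrightarrow>
           norm ((\<Sum>(x, k)\<in>\<D>. measure lborel k *\<^sub>R g x) - I) < e)"
      using d \<open>\<delta> > 0\<close> by (intro exI[of _ "\<lambda>x. ball x \<delta>"]) auto
  qed
  thus ?thesis by blast
qed

lemma box_in_orthant: "0 \<le> c \<Longrightarrow> cbox 0 (\<chi> i. c) \<subseteq> (orthant :: (real^'j::finite) set)"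
  unfolding orthant_def by (auto simp: mem_box_cart)

lemma gw_int_box:
  fixes g :: "real^'j::finite \<Rightarrow> real"
  assumes gr: "\<forall>a b. a \<in> orthant \<longrightarrow> riemann_integrable_on g (cbox a b)"
    and gnn: "\<forall>x\<in>orthant. 0 \<le> g x" and c: "0 \<le> c"
  shows "(\<lambda>x. g x * wexp x) integrable_on cbox 0 (\<chi> i. c)"
proof -
  have "0 \<in> (orthant :: (real^'j) set)" unfolding orthant_def by simp
  hence gi: "g integrable_on cbox 0 (\<chi> i. c)" using gr riemann_has_integral by blast
  show ?thesis using box_in_orthant[OF c] gnn by (intro int_times_cont[OF gi] continuous_wexp) auto
qed

lemma orthant_limit:
  fixes g :: "real^'j::finite \<Rightarrow> real"
  assumes gr: "\<forall>a b. a \<in> orthant \<longrightarrow> riemann_integrable_on g (cbox a b)"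
    and gnn: "\<forall>x\<in>orthant. 0 \<le> g x"
    and bd: "\<And>n::nat. integral (cbox 0 (\<chi> i. real n)) (\<lambda>x. g x * wexp x) \<le> Bd"
  shows "(\<lambda>x. g x * wexp x) integrable_on orthant \<and>
     ((\<lambda>n::nat. integral (cbox 0 (\<chi> i. real n)) (\<lambda>x. g x * wexp x)) \<longlongrightarrow> integral orthant (\<lambda>x. g x * wexp x)) sequentially"
proof -
  define f where "f n x = (if x \<in> cbox 0 (\<chi> i. real n) then g x * wexp x else 0)" for n :: nat and x :: "real^'j"
  have boxI: "cbox 0 (\<chi> i. real n) \<inter> orthant = (cbox 0 (\<chi> i. real n) :: (real^'j) set)" for n :: nat
    using box_in_orthant[of "real n"] by auto
  have fi: "f n integrable_on orthant" for n
    unfolding f_def integrable_restrict_Int boxI by (rule gw_int_box[OF gr gnn]) simp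
  have fint: "integral orthant (f n) = integral (cbox 0 (\<chi> i. real n)) (\<lambda>x. g x * wexp x)" for n
    unfolding f_def integral_restrict_Int boxI ..
  have gw0: "0 \<le> g x * wexp x" if "x \<in> orthant" for x
    using gnn that by (simp add: wexp_def)
  have mono: "f n x \<le> f (Suc n) x" if "x \<in> orthant" for n x
  proof -
    have "x \<in> cbox 0 (\<chi> i. real n) \<Longrightarrow> x \<in> cbox 0 (\<chi> i. real (Suc n))"
      by (auto simp: mem_box_cart) (meson le_add_same_cancel2 order_trans zero_le_one)
    thus ?thesis using gw0[OF that] unfolding f_def by auto
  qed
  have lim: "((\<lambda>n. f n x) \<longlongrightarrow> g x * wexp x) sequentially" if x: "x \<in> orthant" for x
  proof (rule tendsto_eventually)
    obtain n0 :: nat where n0: "(\<Sum>i\<in>UNIV. x$i) \<le> real n0" using real_arch_simple by blast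
    have "x \<in> cbox 0 (\<chi> i. real n)" if "n \<ge> n0" for n
    proof -
      have "x$i \<le> real n" for i
      proof -
        have "x$i \<le> (\<Sum>i\<in>UNIV. x$i)" using x unfolding orthant_def
          by (intro member_le_sum) auto
        also have "\<dots> \<le> real n" using n0 that by linarith
        finally show ?thesis .
      qed
      thus ?thesis using x unfolding orthant_def by (auto simp: mem_box_cart)
    qed
    thus "eventually (\<lambda>n. f n x = g x * wexp x) sequentially"
      unfolding f_def eventually_sequentially by auto
  qed
  have bnd: "bounded (range (\<lambda>n. integral orthant (f n)))"
  proof -
    have "\<bar>integral orthant (f n)\<bar> \<le> Bd" for n
    proof -
      have "0 \<le> integral orthant (f n)" using fi gw0 unfolding f_def by (intro integral_nonneg) auto
      thus ?thesis using bd[of n] fint[of n] by simp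
    qed
    thus ?thesis unfolding bounded_iff by (intro exI[of _ Bd]) auto
  qed
  have "(\<lambda>x. g x * wexp x) integrable_on orthant \<and> ((\<lambda>n. integral orthant (f n)) \<longlongrightarrow> integral orthant (\<lambda>x. g x * wexp x)) sequentially"
    by (rule monotone_convergence_increasing[OF fi mono lim bnd]) auto
  thus ?thesis unfolding fint .
qed



lemma geom_1d:
  fixes \<mu> c :: real
  assumes mu: "0 < \<mu>" and c: "0 < c"
  shows "(\<Sum>t\<in>{1..L}. exp (- (c * real t / \<mu>)) / \<mu>) \<le> 1 / c"
proof (cases "L = 0")
  case True thus ?thesis using c by simp
next
  case False
  define q where "q = exp (- (c / \<mu>))"
  have q01: "0 < q" "q < 1" unfolding q_def using mu c by auto
  have qt: "exp (- (c * real t / \<mu>)) = q ^ t" for t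
    unfolding q_def by (simp add: exp_of_nat_mult[symmetric] algebra_simps)
  have S: "(1 - q) * (\<Sum>t\<in>{1..L}. q ^ t) = q ^ 1 - q ^ Suc L"
    by (rule sum_gp_multiplied) (use False in simp)
  have "(1 - q) * (\<Sum>t\<in>{1..L}. q ^ t) \<le> q" using S q01 by simp
  hence S2: "(\<Sum>t\<in>{1..L}. q ^ t) \<le> q / (1 - q)" using q01 by (simp add: le_divide_eq mult.commute)
  have E: "q / (1 - q) \<le> \<mu> / c"
  proof -
    define E where "E = exp (c / \<mu>)"
    have qE: "q = 1 / E" unfolding q_def E_def by (simp add: exp_minus field_simps)
    have E1: "c / \<mu> \<le> E - 1" unfolding E_def using exp_ge_add_one_self[of "c/\<mu>"] by linarith
    have cm: "0 < c / \<mu>" using c mu by simp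
    have Epos: "0 < E" unfolding E_def by simp
    have "q / (1 - q) = 1 / (E - 1)" unfolding qE using Epos E1 cm by (simp add: field_simps)
    also have "\<dots> \<le> 1 / (c / \<mu>)"
    proof -
      show ?thesis by (rule frac_le) (use E1 cm in auto)
    qed
    also have "\<dots> = \<mu> / c" by simp
    finally show ?thesis .
  qed
  have "(\<Sum>t\<in>{1..L}. exp (- (c * real t / \<mu>)) / \<mu>) = (\<Sum>t\<in>{1..L}. q ^ t) / \<mu>"
    unfolding qt by (simp add: sum_divide_distrib)
  also have "\<dots> \<le> (\<mu> / c) / \<mu>" using S2 E mu by (intro divide_right_mono) auto
  also have "\<dots> = 1 / c" using mu by simp
  finally show ?thesis .
qed

lemma geom_multi:
  fixes \<mu> c :: real
  assumes mu: "0 < \<mu>" and c: "0 < c"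
  shows "(\<Sum>a\<in>PiE UNIV (\<lambda>_::'j::finite. {1..L}). exp (- (c * real (sum a UNIV) / \<mu>)) * (1/\<mu>)^CARD('j)) \<le> (1/c)^CARD('j)"
proof -
  have eq: "exp (- (c * real (sum a UNIV) / \<mu>)) * (1/\<mu>)^CARD('j) = (\<Prod>i\<in>(UNIV::'j set). exp (- (c * real (a i) / \<mu>)) / \<mu>)"
    for a :: "'j \<Rightarrow> nat"
  proof -
    have "exp (- (c * real (sum a UNIV) / \<mu>)) = exp (\<Sum>i\<in>(UNIV::'j set). - (c * real (a i) / \<mu>))"
      by (simp add: sum_divide_distrib sum_distrib_left sum_negf)
    also have "\<dots> = (\<Prod>i\<in>(UNIV::'j set). exp (- (c * real (a i) / \<mu>)))" by (rule exp_sum) simp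
    finally show ?thesis by (simp add: prod.distrib prod_dividef divide_inverse)
  qed
  have "(\<Sum>a\<in>PiE UNIV (\<lambda>_::'j. {1..L}). exp (- (c * real (sum a UNIV) / \<mu>)) * (1/\<mu>)^CARD('j))
      = (\<Sum>a\<in>PiE UNIV (\<lambda>_::'j. {1..L}). \<Prod>i\<in>UNIV. exp (- (c * real (a i) / \<mu>)) / \<mu>)"
    by (rule sum.cong[OF refl]) (rule eq)
  also have "\<dots> = (\<Prod>i\<in>(UNIV::'j set). \<Sum>t\<in>{1..L}. exp (- (c * real t / \<mu>)) / \<mu>)"
    by (rule prod_sum_PiE[symmetric]) auto
  also have "\<dots> = (\<Sum>t\<in>{1..L}. exp (- (c * real t / \<mu>)) / \<mu>) ^ CARD('j)" by simp
  also have "\<dots> \<le> (1/c) ^ CARD('j)"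
    by (intro power_mono geom_1d mu c) (use mu in \<open>auto intro!: sum_nonneg\<close>)
  finally show ?thesis .
qed

lemma pow0_exp_bound:
  assumes d: "0 \<le> d"
  shows "\<exists>c>0. \<forall>s\<ge>0. pow0 s d \<le> c * exp (s / 8)"
proof (cases "d = 0")
  case True thus ?thesis unfolding pow0_def by (intro exI[of _ 1]) auto
next
  case False
  hence dpos: "0 < d" using d by simp
  define c where "c = exp (d * ln (8 * d))"
  have "\<forall>s\<ge>0. pow0 s d \<le> c * exp (s / 8)"
  proof (intro allI impI)
    fix s :: real assume s: "0 \<le> s"
    show "pow0 s d \<le> c * exp (s / 8)"
    proof (cases "s = 0")
      case True thus ?thesis using False unfolding pow0_def c_def by simp
    next
      case False
      hence spos: "0 < s" using s by simp
      have "ln (s / (8 * d)) \<le> s / (8 * d) - 1" using spos dpos by (intro ln_le_minus_one) auto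
      hence "d * ln (s / (8 * d)) \<le> d * (s / (8 * d) - 1)" using dpos by (intro mult_left_mono) auto
      also have "\<dots> = s / 8 - d" using dpos by (simp add: field_simps)
      finally have "d * ln (s / (8 * d)) \<le> s / 8" using dpos by linarith
      moreover have "ln s = ln (8 * d) + ln (s / (8 * d))" using spos dpos by (simp add: ln_div)
      ultimately have "d * ln s \<le> d * ln (8 * d) + s / 8" by (simp add: algebra_simps)
      hence "exp (d * ln s) \<le> exp (d * ln (8 * d) + s / 8)" by simp
      thus ?thesis unfolding pow0_def c_def using spos \<open>d \<noteq> 0\<close> by (simp add: powr_def exp_add)
    qed
  qed
  thus ?thesis using c_def by (intro exI[of _ c]) auto
qed




lemma wexp_tagv: "0 < \<mu> \<Longrightarrow> wexp (tagv \<mu> (a::'j::finite \<Rightarrow> nat)) = exp (- (real (sum a UNIV) / \<mu>))"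
  unfolding wexp_def tagv_def by (simp add: sum_divide_distrib)

lemma sum_tagv: "(\<Sum>i\<in>UNIV. tagv \<mu> (a::'j::finite \<Rightarrow> nat) $ i) = real (sum a UNIV) / \<mu>"
  unfolding tagv_def by (simp add: sum_divide_distrib)

lemma expect_rewrite:
  fixes \<sigma> :: "'j::finite \<Rightarrow> nat" and g :: "real^'j \<Rightarrow> real"
  assumes inj: "inj \<sigma>" and rng: "range \<sigma> \<subseteq> {1..m}" and mk: "CARD('j) + 2 \<le> m" and N: "0 < N"
  shows "comp_expect N m (\<lambda>X. g (\<chi> i. real (X (\<sigma> i)) / (real N / real m))) =
     (\<Sum>a\<in>PiE UNIV (\<lambda>_::'j. {1..N}). g (tagv (real N / real m) a) * Pm CARD('j) N m (sum a UNIV))"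
proof -
  have "comp_expect N m (\<lambda>X. g (\<chi> i. real (X (\<sigma> i)) / (real N / real m)))
      = comp_expect N m (\<lambda>X. (\<lambda>a. g (tagv (real N / real m) a)) (\<lambda>i. X (\<sigma> i)))"
    unfolding tagv_def by simp
  also have "\<dots> = (\<Sum>a\<in>PiE UNIV (\<lambda>_::'j. {1..N}). g (tagv (real N / real m) a) * real ((N - sum a UNIV - 1) choose (m - CARD('j) - 1)))
        / real ((N - 1) choose (m - 1))"
    by (rule comp_expect_sum[OF inj rng mk N])
  also have "\<dots> = (\<Sum>a\<in>PiE UNIV (\<lambda>_::'j. {1..N}). g (tagv (real N / real m) a) * Pm CARD('j) N m (sum a UNIV))"
    unfolding Pm_def by (simp add: sum_divide_distrib)
  finally show ?thesis .
qed

lemma local_sum: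
  fixes g :: "real^'j::finite \<Rightarrow> real" and A :: "('j \<Rightarrow> nat) set"
  assumes mu: "0 < \<mu>" and fin: "finite A" and gnn: "\<forall>a\<in>A. 0 \<le> g (tagv \<mu> a)"
    and hP: "\<forall>a\<in>A. \<bar>Pm CARD('j) N m (sum a UNIV) * \<mu>^CARD('j) * exp (real (sum a UNIV) / \<mu>) - 1\<bar> \<le> \<eta>"
  shows "\<bar>(\<Sum>a\<in>A. g (tagv \<mu> a) * Pm CARD('j) N m (sum a UNIV)) - (\<Sum>a\<in>A. g (tagv \<mu> a) * wexp (tagv \<mu> a)) * (1/\<mu>)^CARD('j)\<bar>
         \<le> \<eta> * ((\<Sum>a\<in>A. g (tagv \<mu> a) * wexp (tagv \<mu> a)) * (1/\<mu>)^CARD('j))"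
proof -
  let ?k = "CARD('j)"
  have trm: "\<bar>g (tagv \<mu> a) * Pm ?k N m (sum a UNIV) - g (tagv \<mu> a) * wexp (tagv \<mu> a) * (1/\<mu>)^?k\<bar>
      \<le> \<eta> * (g (tagv \<mu> a) * wexp (tagv \<mu> a) * (1/\<mu>)^?k)" if a: "a \<in> A" for a
  proof -
    define s where "s = real (sum a UNIV)"
    define w where "w = exp (- (s / \<mu>))"
    define P where "P = Pm ?k N m (sum a UNIV)"
    have wpos: "0 < w" unfolding w_def by simp
    have ww: "w * exp (s / \<mu>) = 1" unfolding w_def by (simp add: exp_minus field_simps)
    have mk: "\<mu>^?k * (1/\<mu>)^?k = 1" using mu by (simp add: power_one_over)
    have "P - w * (1/\<mu>)^?k = (w * (1/\<mu>)^?k) * (P * \<mu>^?k * exp (s / \<mu>) - 1)"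
    proof -
      have "(w * (1/\<mu>)^?k) * (P * \<mu>^?k * exp (s / \<mu>)) = P * (w * exp (s / \<mu>)) * (\<mu>^?k * (1/\<mu>)^?k)"
        by (simp only: ac_simps)
      also have "\<dots> = P" using ww mk by simp
      finally show ?thesis by (simp add: right_diff_distrib)
    qed
    hence "\<bar>P - w * (1/\<mu>)^?k\<bar> = (w * (1/\<mu>)^?k) * \<bar>P * \<mu>^?k * exp (s / \<mu>) - 1\<bar>"
      using wpos mu by (simp add: abs_mult)
    also have "\<dots> \<le> (w * (1/\<mu>)^?k) * \<eta>"
      using hP a wpos mu unfolding P_def s_def by (intro mult_left_mono) auto
    finally have b: "\<bar>P - w * (1/\<mu>)^?k\<bar> \<le> \<eta> * (w * (1/\<mu>)^?k)" by (simp add: mult.commute)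
    have g0: "0 \<le> g (tagv \<mu> a)" using gnn a by auto
    have "g (tagv \<mu> a) * P - g (tagv \<mu> a) * w * (1/\<mu>)^?k = g (tagv \<mu> a) * (P - w * (1/\<mu>)^?k)"
      by (simp add: algebra_simps)
    hence "\<bar>g (tagv \<mu> a) * P - g (tagv \<mu> a) * w * (1/\<mu>)^?k\<bar> = g (tagv \<mu> a) * \<bar>P - w * (1/\<mu>)^?k\<bar>"
      using g0 by (simp add: abs_mult)
    also have "\<dots> \<le> g (tagv \<mu> a) * (\<eta> * (w * (1/\<mu>)^?k))" using b g0 by (rule mult_left_mono)
    finally show ?thesis unfolding P_def w_def s_def wexp_tagv[OF mu] by (simp add: ac_simps)
  qed
  have "\<bar>(\<Sum>a\<in>A. g (tagv \<mu> a) * Pm ?k N m (sum a UNIV)) - (\<Sum>a\<in>A. g (tagv \<mu> a) * wexp (tagv \<mu> a)) * (1/\<mu>)^?k\<bar>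
      = \<bar>\<Sum>a\<in>A. g (tagv \<mu> a) * Pm ?k N m (sum a UNIV) - g (tagv \<mu> a) * wexp (tagv \<mu> a) * (1/\<mu>)^?k\<bar>"
    by (simp add: sum_subtractf sum_distrib_right)
  also have "\<dots> \<le> (\<Sum>a\<in>A. \<bar>g (tagv \<mu> a) * Pm ?k N m (sum a UNIV) - g (tagv \<mu> a) * wexp (tagv \<mu> a) * (1/\<mu>)^?k\<bar>)"
    by (rule sum_abs)
  also have "\<dots> \<le> (\<Sum>a\<in>A. \<eta> * (g (tagv \<mu> a) * wexp (tagv \<mu> a) * (1/\<mu>)^?k))" by (intro sum_mono trm)
  also have "\<dots> = \<eta> * ((\<Sum>a\<in>A. g (tagv \<mu> a) * wexp (tagv \<mu> a)) * (1/\<mu>)^?k)"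
    by (simp add: sum_distrib_left sum_distrib_right)
  finally show ?thesis .
qed

lemma tail_sum:
  fixes g :: "real^'j::finite \<Rightarrow> real" and K :: nat and \<mu> :: real
  assumes mu1: "1 \<le> \<mu>" and mueq: "\<mu> = real N / real m" and mk: "2 * CARD('j) + 2 \<le> m" and mN: "m \<le> N"
    and gnn: "\<forall>x\<in>orthant. 0 \<le> g x" and G0: "0 \<le> G"
    and gG: "\<forall>x\<in>orthant. g x \<le> G * exp ((\<Sum>i\<in>UNIV. x$i) / 8)"
    and L: "L = nat \<lfloor>K * \<mu>\<rfloor>"
  shows "(\<Sum>a\<in>PiE UNIV (\<lambda>_::'j. {1..N}) - PiE UNIV (\<lambda>_. {1..L}). g (tagv \<mu> a) * Pm CARD('j) N m (sum a UNIV))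
     \<le> G * 4^CARD('j) * exp (CARD('j) / 2) * exp (- (K / 8))"
proof -
  let ?k = "CARD('j)"
  have mu: "0 < \<mu>" using mu1 by simp
  have mpos: "0 < real m" using mk by simp
  have mN_mu: "real m / real N = 1 / \<mu>" using mueq by simp
  let ?A = "PiE UNIV (\<lambda>_::'j. {1..N})"
  have tag_orth: "tagv \<mu> a \<in> orthant" for a :: "'j \<Rightarrow> nat"
    unfolding orthant_def tagv_def using mu by simp
  have bound: "g (tagv \<mu> a) * Pm ?k N m (sum a UNIV) \<le> G * exp (?k / 2) * exp (- (K / 8)) * (exp (- ((1/4) * real (sum a UNIV) / \<mu>)) * (1/\<mu>)^?k)"
    if a: "a \<in> ?A - PiE UNIV (\<lambda>_. {1..L})" for a
  proof -
    define s where "s = real (sum a UNIV)"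
    have apos: "\<forall>i. 1 \<le> a i" using a by (auto simp: PiE_iff)
    obtain i where i: "a i \<notin> {1..L}" using a by (auto simp: PiE_iff)
    have "L < a i" using i apos[rule_format, of i] by auto
    hence "real L + 1 \<le> real (a i)" by linarith
    moreover have "K * \<mu> < real L + 1" using L mu by linarith
    moreover have "real (a i) \<le> s"
    proof -
      have "a i \<le> sum a UNIV" by (rule member_le_sum) auto
      thus ?thesis unfolding s_def by (simp only: of_nat_le_iff)
    qed
    ultimately have sK: "K < s / \<mu>" using mu by (simp add: pos_less_divide_eq)
    have ks: "?k \<le> sum a UNIV"
    proof -
      have "(\<Sum>i\<in>(UNIV::'j set). (1::nat)) \<le> sum a UNIV" using apos by (intro sum_mono) auto
      thus ?thesis by simp
    qed
    have g0: "g (tagv \<mu> a) \<le> G * exp ((\<Sum>i\<in>UNIV. tagv \<mu> a $ i) / 8)" using gG tag_orth[of a] by blast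
    have g1: "g (tagv \<mu> a) \<le> G * exp (s / \<mu> / 8)" using g0 unfolding sum_tagv s_def .
    also have "\<dots> \<le> G * (exp (- (K / 8)) * exp (s / \<mu> / 4))"
    proof (intro mult_left_mono G0)
      have aux: "x/8 \<le> -(real K/8) + x/4" if "real K < x" for x :: real using that by linarith
      have "s / \<mu> / 8 \<le> - (K / 8) + s / \<mu> / 4" using aux[OF sK] .
      thus "exp (s / \<mu> / 8) \<le> exp (- (K / 8)) * exp (s / \<mu> / 4)" by (simp add: exp_add[symmetric])
    qed
    finally have g2: "g (tagv \<mu> a) \<le> G * (exp (- (K / 8)) * exp (s / \<mu> / 4))" .
    have P1: "Pm ?k N m (sum a UNIV) \<le> (1/\<mu>)^?k * exp (- ((s - ?k) * (1/\<mu>) / 2))"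
      using P_upper[OF mk mN ks] mN_mu unfolding s_def by simp
    also have "\<dots> \<le> (1/\<mu>)^?k * (exp (?k / 2) * exp (- (s / \<mu> / 2)))"
    proof (intro mult_left_mono)
      have "- ((s - ?k) * (1/\<mu>) / 2) = ?k / \<mu> / 2 - s / \<mu> / 2" using mu by (simp add: field_simps)
      also have "\<dots> \<le> ?k / 2 - s / \<mu> / 2" using mu1 by (simp add: divide_le_eq field_simps)
      finally show "exp (- ((s - ?k) * (1/\<mu>) / 2)) \<le> exp (?k / 2) * exp (- (s / \<mu> / 2))"
        by (simp add: exp_add[symmetric])
    qed (use mu in simp)
    finally have P2: "Pm ?k N m (sum a UNIV) \<le> (1/\<mu>)^?k * (exp (?k / 2) * exp (- (s / \<mu> / 2)))" .
    have Pnn: "0 \<le> Pm ?k N m (sum a UNIV)" by (simp add: Pm_def)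
    have gnn': "0 \<le> g (tagv \<mu> a)" using gnn tag_orth by blast
    have "g (tagv \<mu> a) * Pm ?k N m (sum a UNIV) \<le> (G * (exp (- (K / 8)) * exp (s / \<mu> / 4))) * ((1/\<mu>)^?k * (exp (?k / 2) * exp (- (s / \<mu> / 2))))"
      by (rule mult_mono[OF g2 P2 _ Pnn]) (use G0 in simp)
    also have "\<dots> = G * exp (?k / 2) * exp (- (K / 8)) * (exp (s / \<mu> / 4) * exp (- (s / \<mu> / 2)) * (1/\<mu>)^?k)"
      by (simp only: ac_simps)
    also have "exp (s / \<mu> / 4) * exp (- (s / \<mu> / 2)) = exp (- ((1/4) * s / \<mu>))"
      by (simp add: exp_add[symmetric])
    finally show ?thesis unfolding s_def .
  qed
  have "(\<Sum>a\<in>?A - PiE UNIV (\<lambda>_. {1..L}). g (tagv \<mu> a) * Pm ?k N m (sum a UNIV))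
      \<le> (\<Sum>a\<in>?A - PiE UNIV (\<lambda>_. {1..L}). G * exp (?k / 2) * exp (- (K / 8)) * (exp (- ((1/4) * real (sum a UNIV) / \<mu>)) * (1/\<mu>)^?k))"
    by (intro sum_mono bound)
  also have "\<dots> \<le> (\<Sum>a\<in>?A. G * exp (?k / 2) * exp (- (K / 8)) * (exp (- ((1/4) * real (sum a UNIV) / \<mu>)) * (1/\<mu>)^?k))"
    by (intro sum_mono2) (use G0 mu in \<open>auto simp: finite_PiE\<close>)
  also have "\<dots> = G * exp (?k / 2) * exp (- (K / 8)) * (\<Sum>a\<in>?A. exp (- ((1/4) * real (sum a UNIV) / \<mu>)) * (1/\<mu>)^?k)"
    by (simp add: sum_distrib_left)
  also have "\<dots> \<le> G * exp (?k / 2) * exp (- (K / 8)) * (1/(1/4))^?k"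
    by (intro mult_left_mono geom_multi mu) (use G0 in auto)
  finally show ?thesis by (simp add: ac_simps)
qed



theorem mainTheorem2:
  fixes g :: "real^'j \<Rightarrow> real" and C d :: real and \<omega> :: "nat \<Rightarrow> real"
  assumes g_nonneg: "\<forall>x\<in>orthant. 0 \<le> g x"
    and g_riemann: "\<forall>a b. a \<in> orthant \<longrightarrow> riemann_integrable_on g (cbox a b)"
    and C_nonneg: "0 \<le> C" and d_nonneg: "0 \<le> d"
    and g_bound: "\<forall>x\<in>orthant. g x \<le> C * pow0 (\<Sum>i\<in>UNIV. x $ i) d"
    and \<omega>_lim: "filterlim \<omega> at_top sequentially"
  shows "\<forall>\<epsilon>>0. \<exists>N0. \<forall>N\<ge>N0. \<forall>m::nat. \<forall>\<sigma>::'j \<Rightarrow> nat.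
           \<omega> N < real m \<and> real m < real N / \<omega> N \<and> inj \<sigma> \<and> range \<sigma> \<subseteq> {1..m} \<longrightarrow>
           \<bar>comp_expect N m (\<lambda>X. g (\<chi> i. real (X (\<sigma> i)) / (real N / real m)))
             - integral orthant (\<lambda>x. g x * exp (- (\<Sum>i\<in>UNIV. x $ i)))\<bar> < \<epsilon>"
proof -
  let ?k = "CARD('j)"
  obtain c where c0: "0 < c" and cb: "\<forall>s\<ge>0. pow0 s d \<le> c * exp (s / 8)"
    using pow0_exp_bound[OF d_nonneg] by blast
  define G where "G = C * c"
  have G0: "0 \<le> G" using C_nonneg c0 by (simp add: G_def)
  have gG: "\<forall>x\<in>orthant. g x \<le> G * exp ((\<Sum>i\<in>UNIV. x$i) / 8)"
  proof
    fix x :: "real^'j" assume x: "x \<in> orthant"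
    have s0: "0 \<le> (\<Sum>i\<in>UNIV. x$i)" using x unfolding orthant_def by (intro sum_nonneg) auto
    have "g x \<le> C * pow0 (\<Sum>i\<in>UNIV. x $ i) d" using g_bound x by blast
    also have "\<dots> \<le> C * (c * exp ((\<Sum>i\<in>UNIV. x$i) / 8))" using cb s0 C_nonneg by (intro mult_left_mono) auto
    finally show "g x \<le> G * exp ((\<Sum>i\<in>UNIV. x$i) / 8)" by (simp add: G_def mult.assoc)
  qed
  have tag_orth: "tagv \<mu> a \<in> orthant" if "0 < \<mu>" for \<mu> and a :: "'j \<Rightarrow> nat"
    unfolding orthant_def tagv_def using that by simp
  have orth0: "(0::real^'j) \<in> orthant" unfolding orthant_def by simp
  define Bd where "Bd = G * (8/7)^?k"
  have RSb: "(\<Sum>a\<in>PiE UNIV (\<lambda>_::'j. {1..L}). g (tagv \<mu> a) * wexp (tagv \<mu> a)) * (1/\<mu>)^?k \<le> Bd"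
    if mu: "0 < \<mu>" for \<mu> L
  proof -
    have t: "g (tagv \<mu> a) * wexp (tagv \<mu> a) \<le> G * exp (- ((7/8) * real (sum a UNIV) / \<mu>))" for a :: "'j \<Rightarrow> nat"
    proof -
      have g1: "g (tagv \<mu> a) \<le> G * exp ((\<Sum>i\<in>UNIV. tagv \<mu> a $ i) / 8)" using gG tag_orth[OF mu] by blast
      have "g (tagv \<mu> a) * wexp (tagv \<mu> a) \<le> (G * exp (real (sum a UNIV) / \<mu> / 8)) * exp (- (real (sum a UNIV) / \<mu>))"
        using g1 unfolding sum_tagv wexp_tagv[OF mu] by (intro mult_right_mono) auto
      also have "\<dots> = G * exp (- ((7/8) * real (sum a UNIV) / \<mu>))"
        by (simp add: mult.assoc exp_add[symmetric])
      finally show ?thesis .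
    qed
    have "(\<Sum>a\<in>PiE UNIV (\<lambda>_::'j. {1..L}). g (tagv \<mu> a) * wexp (tagv \<mu> a)) * (1/\<mu>)^?k
        \<le> (\<Sum>a\<in>PiE UNIV (\<lambda>_::'j. {1..L}). G * exp (- ((7/8) * real (sum a UNIV) / \<mu>))) * (1/\<mu>)^?k"
      using mu by (intro mult_right_mono sum_mono t) auto
    also have "\<dots> = G * (\<Sum>a\<in>PiE UNIV (\<lambda>_::'j. {1..L}). exp (- ((7/8) * real (sum a UNIV) / \<mu>)) * (1/\<mu>)^?k)"
      by (simp add: sum_distrib_left sum_distrib_right mult.assoc)
    also have "\<dots> \<le> G * (1/(7/8))^?k" by (intro mult_left_mono geom_multi mu G0) auto
    finally show ?thesis unfolding Bd_def by simp
  qed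
  have gw_nn: "0 \<le> g x * wexp x" if "x \<in> orthant" for x using g_nonneg that by (simp add: wexp_def)
  have gwbox: "(\<lambda>x. g x * wexp x) integrable_on cbox 0 (\<chi> i. r)" if "0 \<le> r" for r
    by (rule gw_int_box[OF g_riemann g_nonneg that])
  have box_mono: "integral (cbox 0 (\<chi> i. r1)) (\<lambda>x. g x * wexp x) \<le> integral (cbox 0 (\<chi> i. r2)) (\<lambda>x. g x * wexp x)"
    if "0 \<le> r1" "r1 \<le> r2" for r1 r2
  proof (rule integral_subset_le)
    show "cbox 0 (\<chi> i. r1) \<subseteq> (cbox 0 (\<chi> i. r2) :: (real^'j) set)"
      using that by (auto simp: mem_box_cart) (meson order_trans)
    show "(\<lambda>x. g x * wexp x) integrable_on cbox 0 (\<chi> i. r1)" using gwbox that by simp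
    show "(\<lambda>x. g x * wexp x) integrable_on cbox 0 (\<chi> i. r2)" using gwbox that by simp
    show "\<forall>x\<in>cbox 0 (\<chi> i. r2). 0 \<le> g x * wexp x" using gw_nn box_in_orthant[of r2] that by auto
  qed
  have boxbd1: "integral (cbox 0 (\<chi> i. real n)) (\<lambda>x. g x * wexp x) \<le> Bd" if n1: "1 \<le> n" for n :: nat
  proof (rule field_le_epsilon)
    fix e :: real assume e: "0 < e"
    have Kp: "0 < real n" using n1 by simp
    have gr: "riemann_integrable_on g (cbox 0 (\<chi> i. real n))" using g_riemann orth0 by blast
    obtain \<mu>0 where mu0: "\<mu>0 > 0" and RG: "\<forall>\<mu> L. \<mu>0 \<le> \<mu> \<and> 1 \<le> L \<and> real L / \<mu> \<le> real n \<longrightarrow>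
       \<bar>(\<Sum>a\<in>PiE UNIV (\<lambda>_::'j. {1..L}). g (tagv \<mu> a) * wexp (tagv \<mu> a)) * (1/\<mu>)^?k
          - integral (cbox 0 (\<chi> i. real L / \<mu>)) (\<lambda>x. g x * wexp x)\<bar> \<le> e"
      using riemann_grid[OF Kp gr g_nonneg] e by blast
    obtain j :: nat where j: "\<mu>0 + 1 \<le> real j" using real_arch_simple by blast
    have jpos: "0 < real j" using j mu0 by linarith
    have Lj: "real (n * j) / real j = real n" using jpos by simp
    have L1: "1 \<le> n * j" using n1 jpos by (simp add: Suc_le_eq)
    have "\<bar>(\<Sum>a\<in>PiE UNIV (\<lambda>_::'j. {1..n*j}). g (tagv (real j) a) * wexp (tagv (real j) a)) * (1/real j)^?k
          - integral (cbox 0 (\<chi> i. real (n*j) / real j)) (\<lambda>x. g x * wexp x)\<bar> \<le> e"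
      using RG[rule_format, of "real j" "n*j"] j L1 Lj by simp
    moreover have "(\<Sum>a\<in>PiE UNIV (\<lambda>_::'j. {1..n*j}). g (tagv (real j) a) * wexp (tagv (real j) a)) * (1/real j)^?k \<le> Bd"
      by (rule RSb[OF jpos])
    ultimately show "integral (cbox 0 (\<chi> i. real n)) (\<lambda>x. g x * wexp x) \<le> Bd + e" unfolding Lj by linarith
  qed
  have boxbd: "integral (cbox 0 (\<chi> i. real n)) (\<lambda>x. g x * wexp x) \<le> Bd" for n :: nat
  proof (cases "n = 0")
    case True
    have "integral (cbox 0 (\<chi> i. real n)) (\<lambda>x. g x * wexp x) \<le> integral (cbox 0 (\<chi> i. real (1::nat))) (\<lambda>x. g x * wexp x)"
      using True by (intro box_mono) auto
    also have "\<dots> \<le> Bd" by (rule boxbd1) simp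
    finally show ?thesis .
  next
    case False thus ?thesis by (intro boxbd1) simp
  qed
  have OL: "(\<lambda>x. g x * wexp x) integrable_on orthant \<and>
     ((\<lambda>n::nat. integral (cbox 0 (\<chi> i. real n)) (\<lambda>x. g x * wexp x)) \<longlongrightarrow> integral orthant (\<lambda>x. g x * wexp x)) sequentially"
    by (rule orthant_limit[OF g_riemann g_nonneg boxbd])
  define Iinf where "Iinf = integral orthant (\<lambda>x. g x * wexp x)"
  have Iinf0: "0 \<le> Iinf" unfolding Iinf_def using OL gw_nn by (intro integral_nonneg) auto
  have box_le_I: "integral (cbox 0 (\<chi> i. r)) (\<lambda>x. g x * wexp x) \<le> Iinf" if "0 \<le> r" for r
    unfolding Iinf_def
    by (rule integral_subset_le[OF box_in_orthant[OF that] gwbox[OF that] conjunct1[OF OL]]) (use gw_nn in auto)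
  have target: "integral orthant (\<lambda>x. g x * exp (- (\<Sum>i\<in>UNIV. x $ i))) = Iinf"
    unfolding Iinf_def wexp_def ..
  show ?thesis unfolding target
  proof (intro allI impI)
    fix \<epsilon> :: real assume eps: "0 < \<epsilon>"
    obtain n0 :: nat where n0: "\<forall>n\<ge>n0. \<bar>integral (cbox 0 (\<chi> i. real n)) (\<lambda>x. g x * wexp x) - Iinf\<bar> < \<epsilon>/5"
    proof -
      have "((\<lambda>n::nat. integral (cbox 0 (\<chi> i. real n)) (\<lambda>x. g x * wexp x)) \<longlongrightarrow> Iinf) sequentially"
        using OL unfolding Iinf_def by blast
      from LIMSEQ_D[OF this, of "\<epsilon>/5"] eps obtain n0 where "\<forall>n\<ge>n0. norm (integral (cbox 0 (\<chi> i. real n)) (\<lambda>x. g x * wexp x) - Iinf) < \<epsilon>/5"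
        by auto
      thus ?thesis using that by auto
    qed
    define Acon where "Acon = G * 4^?k * exp (?k / 2) + 1"
    have Acon0: "0 < Acon" unfolding Acon_def using G0 by (intro add_nonneg_pos) auto
    obtain K :: nat where K: "real (n0 + 1) + 40 * Acon / \<epsilon> \<le> real K" using real_arch_simple by blast
    have "0 \<le> 40 * Acon / \<epsilon>" using Acon0 eps by simp
    hence "real (n0 + 1) \<le> real K" using K by linarith
    hence Kn0: "n0 + 1 \<le> K" by (simp only: of_nat_le_iff)
    have K1: "1 \<le> K" using Kn0 by simp
    have KA: "40 * Acon / \<epsilon> \<le> real K" using K by simp
    have Kpos: "0 < real K" using K1 by simp
    have tail_small: "G * 4^?k * exp (?k / 2) * exp (- (real K / 8)) \<le> \<epsilon>/5"
    proof -
      have e1: "exp (- (real K / 8)) \<le> 8 / real K"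
      proof -
        have "real K / 8 \<le> exp (real K / 8)" using exp_ge_add_one_self[of "real K / 8"] by linarith
        hence "1 / exp (real K / 8) \<le> 1 / (real K / 8)" using Kpos by (intro divide_left_mono) auto
        thus ?thesis by (simp add: exp_minus inverse_eq_divide)
      qed
      have "G * 4^?k * exp (?k / 2) * exp (- (real K / 8)) \<le> Acon * (8 / real K)"
        unfolding Acon_def using e1 G0 by (intro mult_mono) auto
      also have "\<dots> \<le> \<epsilon>/5"
      proof -
        have "40 * Acon \<le> real K * \<epsilon>" using KA eps by (simp add: pos_divide_le_eq mult.commute)
        thus ?thesis using Kpos by (simp add: divide_simps mult.commute)
      qed
      finally show ?thesis .
    qed
    have grK: "riemann_integrable_on g (cbox 0 (\<chi> i. real K + 1))" using g_riemann orth0 by blast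
    obtain \<mu>1 where mu1: "\<mu>1 > 0" and RG: "\<forall>\<mu> L. \<mu>1 \<le> \<mu> \<and> 1 \<le> L \<and> real L / \<mu> \<le> real K + 1 \<longrightarrow>
       \<bar>(\<Sum>a\<in>PiE UNIV (\<lambda>_::'j. {1..L}). g (tagv \<mu> a) * wexp (tagv \<mu> a)) * (1/\<mu>)^?k
          - integral (cbox 0 (\<chi> i. real L / \<mu>)) (\<lambda>x. g x * wexp x)\<bar> \<le> \<epsilon>/5"
    proof -
      have Kp1: "0 < real K + 1" by simp
      have e5: "0 < \<epsilon>/5" using eps by simp
      show ?thesis using riemann_grid[OF Kp1 grK g_nonneg, rule_format, OF e5] that by blast
    qed
    define \<eta> where "\<eta> = (\<epsilon>/5) / (Iinf + \<epsilon>/5 + 1)"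
    have eta0: "0 < \<eta>" unfolding \<eta>_def using eps Iinf0 by simp
    have etab: "\<eta> * (Iinf + \<epsilon>/5) < \<epsilon>/5"
    proof -
      have "\<eta> * (Iinf + \<epsilon>/5) = (\<epsilon>/5) * ((Iinf + \<epsilon>/5) / (Iinf + \<epsilon>/5 + 1))" unfolding \<eta>_def by simp
      also have "\<dots> < (\<epsilon>/5) * 1" using eps Iinf0 by (intro mult_strict_left_mono) auto
      finally show ?thesis by simp
    qed
    define T where "T = real ?k * real K"
    have T0: "0 \<le> T" unfolding T_def by simp
    obtain \<delta> where d0: "\<delta> > 0" and dsm: "(?k + 1 + T) * \<delta> \<le> 1/4"
      and dlo: "1 - \<eta> < (1 - real ?k * \<delta>)^?k * exp (- ((2*T*(T+1) + 8*T) * \<delta>))"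
      and dup: "exp ((?k + (?k+1)*T) * \<delta>) < 1 + \<eta>"
      using choose_delta[OF T0 eta0, of ?k] by blast
    define M0 where "M0 = 1/\<delta> + \<mu>1 + real K + 2 * real ?k + 3"
    have M0_ge: "1/\<delta> \<le> M0" "\<mu>1 \<le> M0" "real K \<le> M0" "2 * real ?k + 3 \<le> M0" "1 \<le> M0"
      unfolding M0_def using d0 mu1 by auto
    obtain N0 where N0: "\<forall>N\<ge>N0. M0 \<le> \<omega> N"
      using \<omega>_lim unfolding filterlim_at_top eventually_sequentially by blast
    show "\<exists>N0. \<forall>N\<ge>N0. \<forall>m::nat. \<forall>\<sigma>::'j \<Rightarrow> nat.
           \<omega> N < real m \<and> real m < real N / \<omega> N \<and> inj \<sigma> \<and> range \<sigma> \<subseteq> {1..m} \<longrightarrow>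
           \<bar>comp_expect N m (\<lambda>X. g (\<chi> i. real (X (\<sigma> i)) / (real N / real m))) - Iinf\<bar> < \<epsilon>"
    proof (intro exI[of _ N0] allI impI)
      fix N m :: nat and \<sigma> :: "'j \<Rightarrow> nat"
      assume NN0: "N0 \<le> N" and H: "\<omega> N < real m \<and> real m < real N / \<omega> N \<and> inj \<sigma> \<and> range \<sigma> \<subseteq> {1..m}"
      have wM: "M0 \<le> \<omega> N" using N0 NN0 by blast
      have mM: "M0 < real m" using H wM by linarith
      have wpos: "0 < \<omega> N" using wM M0_ge by linarith
      have mpos: "0 < real m" using mM M0_ge by linarith
      define \<mu> where "\<mu> = real N / real m"
      have muM: "M0 < \<mu>"
      proof -
        have "real m * \<omega> N < real N" using H wpos by (simp add: pos_less_divide_eq)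
        hence "\<omega> N < real N / real m" using mpos by (simp add: pos_less_divide_eq mult.commute)
        thus ?thesis unfolding \<mu>_def using wM by linarith
      qed
      have mu1': "1 \<le> \<mu>" using muM M0_ge by linarith
      have mu0: "0 < \<mu>" using mu1' by linarith
      have Nmu: "real N = \<mu> * real m" unfolding \<mu>_def using mpos by simp
      have Npos: "0 < N"
      proof -
        have "0 < \<mu> * real m" using mu0 mpos by simp
        thus ?thesis using Nmu by simp
      qed
      have mN: "m \<le> N"
      proof -
        have "1 * real m \<le> \<mu> * real m" using mu1' mpos by (intro mult_right_mono) auto
        thus ?thesis using Nmu by simp
      qed
      have mk2: "2 * ?k + 2 \<le> m" using mM M0_ge by linarith
      have mk: "?k + 2 \<le> m" using mk2 by simp
      define L where "L = nat \<lfloor>real K * \<mu>\<rfloor>"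
      have Kmu1: "1 \<le> real K * \<mu>" using K1 mu1' by (metis mult_mono' of_nat_1 of_nat_le_iff mult_1 zero_le_one)
      have L_le: "real L \<le> real K * \<mu>" unfolding L_def using Kmu1 by linarith
      have L_gt: "real K * \<mu> - 1 < real L" unfolding L_def using Kmu1 by linarith
      have L1: "1 \<le> L" unfolding L_def using Kmu1 by linarith
      have Lmu_le: "real L / \<mu> \<le> real K" using L_le mu0 by (simp add: pos_divide_le_eq)
      have Lmu_ge: "real n0 \<le> real L / \<mu>"
      proof -
        have "real K - 1 \<le> real K - 1 / \<mu>" using mu1' by (simp add: divide_le_eq)
        also have "real K - 1 / \<mu> = (real K * \<mu> - 1) / \<mu>" using mu0 by (simp add: field_simps)
        also have "\<dots> \<le> real L / \<mu>" using L_gt mu0 by (intro divide_right_mono) auto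
        finally show ?thesis using Kn0 by linarith
      qed
      have LN: "L \<le> N"
      proof -
        have "real K * \<mu> \<le> real m * \<mu>" using mM M0_ge mu0 by (intro mult_right_mono) auto
        thus ?thesis using L_le Nmu by (simp add: mult.commute)
      qed
      define AL where "AL = PiE UNIV (\<lambda>_::'j. {1..L})"
      define AN where "AN = PiE UNIV (\<lambda>_::'j. {1..N})"
      have sub: "AL \<subseteq> AN" unfolding AL_def AN_def using LN by (auto simp: PiE_iff) (meson order_trans)
      have finAN: "finite AN" unfolding AN_def by (simp add: finite_PiE)
      define RS where "RS = (\<Sum>a\<in>AL. g (tagv \<mu> a) * wexp (tagv \<mu> a)) * (1/\<mu>)^?k"
      define IB where "IB = integral (cbox 0 (\<chi> i. real L / \<mu>)) (\<lambda>x. g x * wexp x)"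
      have h1: "\<bar>RS - IB\<bar> \<le> \<epsilon>/5"
        using RG[rule_format, of \<mu> L] muM M0_ge L1 Lmu_le unfolding RS_def IB_def AL_def by simp
      have IB_le: "IB \<le> Iinf" unfolding IB_def by (rule box_le_I) (use mu0 in simp)
      have h2: "\<bar>IB - Iinf\<bar> < \<epsilon>/5"
      proof -
        have "integral (cbox 0 (\<chi> i. real n0)) (\<lambda>x. g x * wexp x) \<le> IB"
          unfolding IB_def by (intro box_mono Lmu_ge) simp
        moreover have "\<bar>integral (cbox 0 (\<chi> i. real n0)) (\<lambda>x. g x * wexp x) - Iinf\<bar> < \<epsilon>/5" using n0 by blast
        ultimately show ?thesis using IB_le by linarith
      qed
      have hP: "\<forall>a\<in>AL. \<bar>Pm ?k N m (sum a UNIV) * \<mu>^?k * exp (real (sum a UNIV) / \<mu>) - 1\<bar> \<le> \<eta>"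
      proof
        fix a assume a: "a \<in> AL"
        define s where "s = sum a UNIV"
        have ai: "\<forall>i. 1 \<le> a i \<and> a i \<le> L" using a unfolding AL_def by (auto simp: PiE_iff)
        have ks: "?k \<le> s"
        proof -
          have "(\<Sum>i\<in>(UNIV::'j set). (1::nat)) \<le> sum a UNIV" using ai by (intro sum_mono) auto
          thus ?thesis unfolding s_def by simp
        qed
        have sL: "s \<le> ?k * L"
        proof -
          have "sum a UNIV \<le> (\<Sum>i\<in>(UNIV::'j set). L)" using ai by (intro sum_mono) auto
          thus ?thesis unfolding s_def by simp
        qed
        have m1: "1 \<le> real m * \<delta>"
        proof -
          have "1/\<delta> \<le> real m" using mM M0_ge by linarith
          thus ?thesis using d0 by (simp add: divide_le_eq mult.commute)
        qed
        have mdN: "real m \<le> \<delta> * real N"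
        proof -
          have "1/\<delta> \<le> \<mu>" using muM M0_ge by linarith
          hence "1 \<le> \<mu> * \<delta>" using d0 by (simp add: divide_le_eq)
          hence "real m * 1 \<le> real m * (\<mu> * \<delta>)" using mpos by (intro mult_left_mono) auto
          thus ?thesis using Nmu by (simp add: ac_simps)
        qed
        have sT: "real (s * m) \<le> T * real N"
        proof -
          have "real s \<le> real ?k * real L" using sL by (metis of_nat_le_iff of_nat_mult)
          also have "\<dots> \<le> real ?k * (real K * \<mu>)" using L_le by (intro mult_left_mono) auto
          finally have "real s * real m \<le> real ?k * (real K * \<mu>) * real m" using mpos by (intro mult_right_mono) auto
          also have "\<dots> = T * real N" unfolding T_def Nmu by (simp add: ac_simps)
          finally show ?thesis by simp
        qed
        note PL = P_local[OF T0 d0 dsm m1 mdN ks sT]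
        have eqs: "(real N / real m)^?k = \<mu>^?k" "real (s * m) / real N = real s / \<mu>"
          unfolding \<mu>_def using mpos Npos by (auto simp: field_simps)
        have "1 - \<eta> < Pm ?k N m s * \<mu>^?k * exp (real s / \<mu>)" "Pm ?k N m s * \<mu>^?k * exp (real s / \<mu>) < 1 + \<eta>"
          using PL dlo dup unfolding eqs by linarith+
        thus "\<bar>Pm ?k N m (sum a UNIV) * \<mu>^?k * exp (real (sum a UNIV) / \<mu>) - 1\<bar> \<le> \<eta>"
          unfolding s_def by linarith
      qed
      have gtag: "\<forall>a\<in>AL. 0 \<le> g (tagv \<mu> a)" using g_nonneg tag_orth[OF mu0] by blast
      have loc: "\<bar>(\<Sum>a\<in>AL. g (tagv \<mu> a) * Pm ?k N m (sum a UNIV)) - RS\<bar> \<le> \<eta> * RS"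
        unfolding RS_def by (rule local_sum[OF mu0 _ gtag hP]) (simp add: AL_def finite_PiE)
      have tl: "(\<Sum>a\<in>AN - AL. g (tagv \<mu> a) * Pm ?k N m (sum a UNIV)) \<le> \<epsilon>/5"
      proof -
        have "(\<Sum>a\<in>AN - AL. g (tagv \<mu> a) * Pm ?k N m (sum a UNIV)) \<le> G * 4^?k * exp (?k / 2) * exp (- (real K / 8))"
          unfolding AN_def AL_def by (rule tail_sum[OF mu1' \<mu>_def mk2 mN g_nonneg G0 gG L_def])
        thus ?thesis using tail_small by linarith
      qed
      have tl0: "0 \<le> (\<Sum>a\<in>AN - AL. g (tagv \<mu> a) * Pm ?k N m (sum a UNIV))"
        using g_nonneg tag_orth[OF mu0] by (intro sum_nonneg mult_nonneg_nonneg) (auto simp: Pm_def)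
      have E: "comp_expect N m (\<lambda>X. g (\<chi> i. real (X (\<sigma> i)) / (real N / real m)))
          = (\<Sum>a\<in>AL. g (tagv \<mu> a) * Pm ?k N m (sum a UNIV)) + (\<Sum>a\<in>AN - AL. g (tagv \<mu> a) * Pm ?k N m (sum a UNIV))"
      proof -
        have "comp_expect N m (\<lambda>X. g (\<chi> i. real (X (\<sigma> i)) / (real N / real m)))
            = (\<Sum>a\<in>AN. g (tagv \<mu> a) * Pm ?k N m (sum a UNIV))"
          unfolding AN_def \<mu>_def using H mk Npos by (intro expect_rewrite) auto
        also have "\<dots> = (\<Sum>a\<in>AN - AL. g (tagv \<mu> a) * Pm ?k N m (sum a UNIV)) + (\<Sum>a\<in>AL. g (tagv \<mu> a) * Pm ?k N m (sum a UNIV))"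
          by (rule sum.subset_diff[OF sub finAN])
        finally show ?thesis by simp
      qed
      have RS0: "0 \<le> RS" unfolding RS_def using g_nonneg tag_orth[OF mu0] mu0
        by (intro mult_nonneg_nonneg sum_nonneg) (auto simp: wexp_def)
      have RSle: "RS \<le> Iinf + \<epsilon>/5" using h1 IB_le by linarith
      have "\<eta> * RS \<le> \<eta> * (Iinf + \<epsilon>/5)" using RSle eta0 by (intro mult_left_mono) auto
      hence etaRS: "\<eta> * RS < \<epsilon>/5" using etab by linarith
      show "\<bar>comp_expect N m (\<lambda>X. g (\<chi> i. real (X (\<sigma> i)) / (real N / real m))) - Iinf\<bar> < \<epsilon>"
        unfolding E using loc h1 h2 tl tl0 etaRS eps by linarith
    qed
  qed
qed


end
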